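(* Let $G$ be a finite group and $H \le G$ a subgroup with $H \neq \{e\}$. Let $X$ be the set of right cosets of $H$ in $G$, on which $G$ acts by right multiplication; for $g \in G$ let $\mathrm{fix}_X(g)$ be the number of points of $X$ fixed by $g$, and let $r_X(G)$ be the number of orbits of $H$ on $X$. Then (i) $D_H > \frac{1}{|G|}\sum_{h \in H,\, h \neq e} \mathrm{fix}_X(h)$; (ii) $D_H > r_X(G)/|X| - 1/|H|$.
   Context: For a finite group $G$, let $\mathrm{Irr}(G)$ be its set of complex irreducible characters and $d_\chi=\chi(e)$. For $H \le G$ let $D_H = \frac{1}{|G|}\sum_{\chi \in \mathrm{Irr}(G)} d_\chi \big|\sum_{h \in H, h \neq e}\chi(h)\big|$, the $L_1$ distance between the distributions $P_H(\chi)=\frac{d_\chi}{|G|}\sum_{h\in H}\chi(h)$ and $P_{\{e\}}$ on $\mathrm{Irr}(G)$. *)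

theory Defs
  imports "HOL-Algebra.Coset" "Jordan_Normal_Form.Matrix"
begin

definition is_rep :: "('a, 'b) monoid_scheme \<Rightarrow> nat \<Rightarrow> ('a \<Rightarrow> complex mat) \<Rightarrow> bool" where
  "is_rep G n \<rho> \<longleftrightarrow>
     (\<forall>g \<in> carrier G. \<rho> g \<in> carrier_mat n n) \<and>
     \<rho> \<one>\<^bsub>G\<^esub> = 1\<^sub>m n \<and>
     (\<forall>g \<in> carrier G. \<forall>h \<in> carrier G. \<rho> (g \<otimes>\<^bsub>G\<^esub> h) = \<rho> g * \<rho> h)"

definition is_subspace :: "nat \<Rightarrow> complex vec set \<Rightarrow> bool" where
  "is_subspace n W \<longleftrightarrow> W \<subseteq> carrier_vec n \<and> 0\<^sub>v n \<in> W \<and>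
     (\<forall>v \<in> W. \<forall>w \<in> W. v + w \<in> W) \<and> (\<forall>c. \<forall>v \<in> W. c \<cdot>\<^sub>v v \<in> W)"

definition irred_rep :: "('a, 'b) monoid_scheme \<Rightarrow> nat \<Rightarrow> ('a \<Rightarrow> complex mat) \<Rightarrow> bool" where
  "irred_rep G n \<rho> \<longleftrightarrow> is_rep G n \<rho> \<and> n > 0 \<and>
     (\<forall>W. is_subspace n W \<and> (\<forall>g \<in> carrier G. \<forall>w \<in> W. \<rho> g *\<^sub>v w \<in> W)
          \<longrightarrow> W = {0\<^sub>v n} \<or> W = carrier_vec n)"

definition mat_trace :: "complex mat \<Rightarrow> complex" where
  "mat_trace A = (\<Sum>i < dim_row A. A $$ (i, i))"

definition character :: "('a, 'b) monoid_scheme \<Rightarrow> ('a \<Rightarrow> complex mat) \<Rightarrow> 'a \<Rightarrow> complex" where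
  "character G \<rho> = (\<lambda>g. if g \<in> carrier G then mat_trace (\<rho> g) else 0)"

definition Irr :: "('a, 'b) monoid_scheme \<Rightarrow> ('a \<Rightarrow> complex) set" where
  "Irr G = {\<chi>. \<exists>n \<rho>. irred_rep G n \<rho> \<and> \<chi> = character G \<rho>}"

definition D :: "('a, 'b) monoid_scheme \<Rightarrow> 'a set \<Rightarrow> real" where
  "D G H = (1 / real (card (carrier G))) *
     (\<Sum>\<chi> \<in> Irr G. cmod (\<chi> \<one>\<^bsub>G\<^esub>) * cmod (\<Sum>h \<in> H - {\<one>\<^bsub>G\<^esub>}. \<chi> h))"

definition fixX :: "('a, 'b) monoid_scheme \<Rightarrow> 'a set \<Rightarrow> 'a \<Rightarrow> nat" where
  "fixX G H g = card {x \<in> rcosets\<^bsub>G\<^esub> H. x #>\<^bsub>G\<^esub> g = x}"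

definition rX :: "('a, 'b) monoid_scheme \<Rightarrow> 'a set \<Rightarrow> nat" where
  "rX G H = card ((\<lambda>x. {x #>\<^bsub>G\<^esub> h | h. h \<in> H}) ` (rcosets\<^bsub>G\<^esub> H))"

end

theory Submission
  imports Defs "Jordan_Normal_Form.Schur_Decomposition" "HOL-Algebra.Group_Action" "HOL-Algebra.Multiplicative_Group"
begin

lemma mult_entry:
  assumes "A \<in> carrier_mat m l" "B \<in> carrier_mat l n" "i < m" "j < n"
  shows "(A * B) $$ (i,j) = (\<Sum>k<l. A $$ (i,k) * B $$ (k,j))"
  using assms by (auto simp: scalar_prod_def lessThan_atLeast0 intro!: sum.cong)

lemma mult_vec_entry:
  assumes "A \<in> carrier_mat m l" "v \<in> carrier_vec l" "i < m"
  shows "(A *\<^sub>v v) $ i = (\<Sum>k<l. A $$ (i,k) * v $ k)"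
  using assms by (auto simp: scalar_prod_def lessThan_atLeast0 intro!: sum.cong)

lemma mat_trace_mult_comm:
  assumes A: "A \<in> carrier_mat m n" and B: "B \<in> carrier_mat n m"
  shows "mat_trace (A * B) = mat_trace (B * A)"
proof -
  have "mat_trace (A * B) = (\<Sum>i<m. \<Sum>k<n. A $$ (i,k) * B $$ (k,i))"
    unfolding mat_trace_def using A B
    by (intro sum.cong) (auto simp: mult_entry[OF A B] mult_entry[OF B A] simp del: index_mult_mat(1))
  also have "\<dots> = (\<Sum>k<n. \<Sum>i<m. B $$ (k,i) * A $$ (i,k))"
    by (subst sum.swap) (simp add: mult.commute)
  also have "\<dots> = mat_trace (B * A)"
    unfolding mat_trace_def using A B
    by (intro sum.cong) (auto simp: mult_entry[OF A B] mult_entry[OF B A] simp del: index_mult_mat(1))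
  finally show ?thesis .
qed

lemma mat_trace_one: "mat_trace (1\<^sub>m n) = of_nat n"
  unfolding mat_trace_def by simp

lemma mat_trace_zero_dim: "A \<in> carrier_mat 0 0 \<Longrightarrow> mat_trace A = 0"
  unfolding mat_trace_def by auto

lemma mat_vec_inj:
  fixes A :: "complex mat"
  assumes A: "A \<in> carrier_mat m n"
   and inj: "\<And>v. v \<in> carrier_vec n \<Longrightarrow> A *\<^sub>v v = 0\<^sub>v m \<Longrightarrow> v = 0\<^sub>v n"
   and v: "v \<in> carrier_vec n" and w: "w \<in> carrier_vec n" and eq: "A *\<^sub>v v = A *\<^sub>v w"
  shows "v = w"
proof -
  have "A *\<^sub>v (v - w) = A *\<^sub>v v - A *\<^sub>v w"
    using A v w by (simp add: mult_minus_distrib_mat_vec)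
  also have "\<dots> = 0\<^sub>v m" using eq A w by auto
  finally have "v - w = 0\<^sub>v n" using inj v w by auto
  then have "v $ i = w $ i" if "i < n" for i
  proof -
    have "(v - w) $ i = v $ i - w $ i" using that w by auto
    moreover have "(v - w) $ i = 0" using \<open>v - w = 0\<^sub>v n\<close> that by simp
    ultimately show ?thesis by simp
  qed
  then show ?thesis using v w by (intro eq_vecI) auto
qed

lemma mat_mult_unit_vec:
  fixes A :: "complex mat"
  assumes A: "A \<in> carrier_mat m n" and j: "j < n"
  shows "A *\<^sub>v unit_vec n j = col A j"
proof (rule eq_vecI)
  fix i assume "i < dim_vec (col A j)"
  hence i: "i < m" using A by auto
  have "(A *\<^sub>v unit_vec n j) $ i = (\<Sum>k<n. A $$ (i,k) * (if k = j then 1 else 0))"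
    using mult_vec_entry[OF A _ i, of "unit_vec n j"] by (simp add: unit_vec_def)
  also have "\<dots> = A $$ (i,j)" using j by (simp add: if_distrib cong: if_cong)
  finally show "(A *\<^sub>v unit_vec n j) $ i = col A j $ i" using i j A by auto
qed (use A in auto)

lemma inj_surj_inverse:
  fixes A :: "complex mat"
  assumes A: "A \<in> carrier_mat m n"
   and inj: "\<And>v. v \<in> carrier_vec n \<Longrightarrow> A *\<^sub>v v = 0\<^sub>v m \<Longrightarrow> v = 0\<^sub>v n"
   and surj: "\<And>u. u \<in> carrier_vec m \<Longrightarrow> \<exists>v\<in>carrier_vec n. A *\<^sub>v v = u"
  shows "\<exists>B\<in>carrier_mat n m. A * B = 1\<^sub>m m \<and> B * A = 1\<^sub>m n"
proof -
  define V where "V j = (SOME v. v \<in> carrier_vec n \<and> A *\<^sub>v v = unit_vec m j)" for j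
  have V: "V j \<in> carrier_vec n \<and> A *\<^sub>v V j = unit_vec m j" for j
    unfolding V_def by (rule someI_ex) (use surj[of "unit_vec m j"] in auto)
  define B where "B = mat_of_cols n (map V [0..<m])"
  have Bc: "B \<in> carrier_mat n m" unfolding B_def by auto
  have colB: "j < m \<Longrightarrow> col B j = V j" for j unfolding B_def using V
    by (subst col_mat_of_cols) auto
  have AB: "A * B = 1\<^sub>m m"
  proof (rule mat_col_eqI)
    fix j assume "j < dim_col (1\<^sub>m m)"
    hence j: "j < m" by simp
    have "col (A * B) j = A *\<^sub>v col B j" using A Bc j by simp
    also have "\<dots> = unit_vec m j" using colB[OF j] V by simp
    finally show "col (A * B) j = col (1\<^sub>m m) j" using j by simp
  qed (use A Bc in auto)
  have BA: "B * A = 1\<^sub>m n"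
  proof (rule mat_col_eqI)
    fix j assume "j < dim_col (1\<^sub>m n)"
    hence j: "j < n" by simp
    have "A *\<^sub>v col (B * A) j = A *\<^sub>v (B *\<^sub>v col A j)" using A Bc j by simp
    also have "\<dots> = (A * B) *\<^sub>v col A j" using A Bc j
      by (metis assoc_mult_mat_vec col_carrier_vec)
    also have "\<dots> = col A j" using AB A j by simp
    also have "\<dots> = A *\<^sub>v unit_vec n j" using A j by (simp add: mat_mult_unit_vec)
    finally have eq: "A *\<^sub>v col (B * A) j = A *\<^sub>v unit_vec n j" .
    have "col (B * A) j = unit_vec n j"
      using mat_vec_inj[OF A inj _ _ eq] A Bc j by auto
    then show "col (B * A) j = col (1\<^sub>m n) j" using j by simp
  qed (use A Bc in auto)
  show ?thesis using AB BA Bc by blast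
qed


lemma mat_mult_zero_vec[simp]:
  "A \<in> carrier_mat m n \<Longrightarrow> A *\<^sub>v 0\<^sub>v n = (0\<^sub>v m :: complex vec)"
  by (intro eq_vecI) auto

lemma zero_col_mat:
  fixes T :: "complex mat"
  assumes T: "T \<in> carrier_mat m n" and z: "\<And>j. j < n \<Longrightarrow> T *\<^sub>v unit_vec n j = 0\<^sub>v m"
  shows "T = 0\<^sub>m m n"
proof (rule mat_col_eqI)
  fix j assume "j < dim_col (0\<^sub>m m n :: complex mat)"
  hence j: "j < n" by simp
  have "col T j = 0\<^sub>v m" using z[OF j] mat_mult_unit_vec[OF T j] by simp
  then show "col T j = col (0\<^sub>m m n) j" using j by (auto simp: col_def)
qed (use T in auto)

lemma rep_carrier: "is_rep G n \<rho> \<Longrightarrow> g \<in> carrier G \<Longrightarrow> \<rho> g \<in> carrier_mat n n"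
  unfolding is_rep_def by auto

lemma rep_one: "is_rep G n \<rho> \<Longrightarrow> \<rho> \<one>\<^bsub>G\<^esub> = 1\<^sub>m n"
  unfolding is_rep_def by auto

lemma rep_mult: "is_rep G n \<rho> \<Longrightarrow> g \<in> carrier G \<Longrightarrow> h \<in> carrier G \<Longrightarrow>
   \<rho> (g \<otimes>\<^bsub>G\<^esub> h) = \<rho> g * \<rho> h"
  unfolding is_rep_def by auto

lemma rep_inv_left:
  assumes "group G" "is_rep G n \<rho>" "g \<in> carrier G"
  shows "\<rho> (inv\<^bsub>G\<^esub> g) * \<rho> g = 1\<^sub>m n"
proof -
  interpret group G by fact
  have "\<rho> (inv\<^bsub>G\<^esub> g) * \<rho> g = \<rho> (inv\<^bsub>G\<^esub> g \<otimes>\<^bsub>G\<^esub> g)" using assms rep_mult by (metis inv_closed)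
  also have "\<dots> = 1\<^sub>m n" using assms rep_one by (metis l_inv)
  finally show ?thesis .
qed

lemma rep_inv_right:
  assumes "group G" "is_rep G n \<rho>" "g \<in> carrier G"
  shows "\<rho> g * \<rho> (inv\<^bsub>G\<^esub> g) = 1\<^sub>m n"
proof -
  interpret group G by fact
  have "\<rho> g * \<rho> (inv\<^bsub>G\<^esub> g) = \<rho> (g \<otimes>\<^bsub>G\<^esub> inv\<^bsub>G\<^esub> g)" using assms rep_mult by (metis inv_closed)
  also have "\<dots> = 1\<^sub>m n" using assms rep_one by (metis r_inv)
  finally show ?thesis .
qed

lemma character_conj:
  assumes grp: "group G" and r: "is_rep G n \<rho>" and x: "x \<in> carrier G" and g: "g \<in> carrier G"
  shows "character G \<rho> (x \<otimes>\<^bsub>G\<^esub> g \<otimes>\<^bsub>G\<^esub> inv\<^bsub>G\<^esub> x) = character G \<rho> g"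
proof -
  interpret group G by fact
  have c: "\<rho> x \<in> carrier_mat n n" "\<rho> g \<in> carrier_mat n n" "\<rho> (inv\<^bsub>G\<^esub> x) \<in> carrier_mat n n"
    using rep_carrier[OF r x] rep_carrier[OF r g] rep_carrier[OF r inv_closed[OF x]] by auto
  have "\<rho> (x \<otimes>\<^bsub>G\<^esub> g \<otimes>\<^bsub>G\<^esub> inv\<^bsub>G\<^esub> x) = \<rho> x * (\<rho> g * \<rho> (inv\<^bsub>G\<^esub> x))"
  proof -
    have "\<rho> (x \<otimes>\<^bsub>G\<^esub> g \<otimes>\<^bsub>G\<^esub> inv\<^bsub>G\<^esub> x) = \<rho> (x \<otimes>\<^bsub>G\<^esub> g) * \<rho> (inv\<^bsub>G\<^esub> x)"
      using rep_mult[OF r] x g by simp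
    also have "\<dots> = (\<rho> x * \<rho> g) * \<rho> (inv\<^bsub>G\<^esub> x)" using rep_mult[OF r] x g by simp
    finally show ?thesis using c by (simp add: assoc_mult_mat[of _ n n _ n _ n])
  qed
  hence "mat_trace (\<rho> (x \<otimes>\<^bsub>G\<^esub> g \<otimes>\<^bsub>G\<^esub> inv\<^bsub>G\<^esub> x)) = mat_trace (\<rho> x * (\<rho> g * \<rho> (inv\<^bsub>G\<^esub> x)))"
    by simp
  also have "\<dots> = mat_trace ((\<rho> g * \<rho> (inv\<^bsub>G\<^esub> x)) * \<rho> x)"
    by (rule mat_trace_mult_comm) (use c in auto)
  also have "\<dots> = mat_trace (\<rho> g * (\<rho> (inv\<^bsub>G\<^esub> x) * \<rho> x))" using c by simp
  also have "\<dots> = mat_trace (\<rho> g)" using rep_inv_left[OF grp r x] c by simp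
  finally show ?thesis unfolding character_def using x g by simp
qed

lemma character_one: "is_rep G n \<rho> \<Longrightarrow> \<one>\<^bsub>G\<^esub> \<in> carrier G \<Longrightarrow> character G \<rho> \<one>\<^bsub>G\<^esub> = of_nat n"
  unfolding character_def by (simp add: rep_one mat_trace_one)

lemma irred_subspace:
  assumes "irred_rep G n \<rho>" "is_subspace n W" "\<And>g w. g \<in> carrier G \<Longrightarrow> w \<in> W \<Longrightarrow> \<rho> g *\<^sub>v w \<in> W"
  shows "W = {0\<^sub>v n} \<or> W = carrier_vec n"
  using assms unfolding irred_rep_def by blast

lemma schur_nonzero:
  assumes grp: "group G" and r: "irred_rep G m \<rho>" and s: "irred_rep G n \<sigma>"
   and T: "T \<in> carrier_mat m n" and inter: "\<And>g. g \<in> carrier G \<Longrightarrow> \<rho> g * T = T * \<sigma> g"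
   and nz: "T \<noteq> 0\<^sub>m m n"
  shows "character G \<rho> = character G \<sigma>"
proof -
  have rr: "is_rep G m \<rho>" and sr: "is_rep G n \<sigma>" using r s unfolding irred_rep_def by auto
  define K where "K = {v \<in> carrier_vec n. T *\<^sub>v v = 0\<^sub>v m}"
  have Ks: "is_subspace n K" unfolding is_subspace_def K_def using T
    by (auto simp: mult_add_distrib_mat_vec mult_mat_vec)
  have Ki: "\<sigma> g *\<^sub>v w \<in> K" if g: "g \<in> carrier G" and w: "w \<in> K" for g w
  proof -
    have sg: "\<sigma> g \<in> carrier_mat n n" "\<rho> g \<in> carrier_mat m m" using rep_carrier[OF sr g] rep_carrier[OF rr g] by auto
    have "T *\<^sub>v (\<sigma> g *\<^sub>v w) = (T * \<sigma> g) *\<^sub>v w" using sg T w K_def by auto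
    also have "\<dots> = (\<rho> g * T) *\<^sub>v w" using inter g by simp
    also have "\<dots> = \<rho> g *\<^sub>v (T *\<^sub>v w)" using sg T w K_def by auto
    also have "\<dots> = 0\<^sub>v m" using w K_def sg by auto
    finally show ?thesis using w sg unfolding K_def by auto
  qed
  have "K \<noteq> carrier_vec n"
  proof
    assume "K = carrier_vec n"
    hence "T *\<^sub>v unit_vec n j = 0\<^sub>v m" if "j < n" for j
      using unit_vec_carrier[of n j] unfolding K_def by blast
    hence "T = 0\<^sub>m m n" using zero_col_mat[OF T] by blast
    with nz show False by simp
  qed
  hence K0: "K = {0\<^sub>v n}" using irred_subspace[OF s Ks Ki] by blast
  have inj: "v = 0\<^sub>v n" if "v \<in> carrier_vec n" "T *\<^sub>v v = 0\<^sub>v m" for v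
    using that K0 unfolding K_def by blast
  define I where "I = {T *\<^sub>v v | v. v \<in> carrier_vec n}"
  have Is: "is_subspace m I" unfolding is_subspace_def I_def using T
  proof (intro conjI ballI allI)
    show "{T *\<^sub>v v |v. v \<in> carrier_vec n} \<subseteq> carrier_vec m" using T by auto
    show "0\<^sub>v m \<in> {T *\<^sub>v v |v. v \<in> carrier_vec n}" using T
      by (auto intro!: exI[of _ "0\<^sub>v n"])
  next
    fix v w assume "v \<in> {T *\<^sub>v v |v. v \<in> carrier_vec n}" "w \<in> {T *\<^sub>v v |v. v \<in> carrier_vec n}"
    then obtain a b where "v = T *\<^sub>v a" "w = T *\<^sub>v b" "a \<in> carrier_vec n" "b \<in> carrier_vec n" by auto
    then show "v + w \<in> {T *\<^sub>v v |v. v \<in> carrier_vec n}" using T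
      by (auto simp: mult_add_distrib_mat_vec intro!: exI[of _ "a + b"])
  next
    fix c v assume "v \<in> {T *\<^sub>v v |v. v \<in> carrier_vec n}"
    then obtain a where "v = T *\<^sub>v a" "a \<in> carrier_vec n" by auto
    then show "c \<cdot>\<^sub>v v \<in> {T *\<^sub>v v |v. v \<in> carrier_vec n}" using T
      by (auto simp: mult_mat_vec intro!: exI[of _ "c \<cdot>\<^sub>v a"])
  qed
  have Ii: "\<rho> g *\<^sub>v w \<in> I" if g: "g \<in> carrier G" and w: "w \<in> I" for g w
  proof -
    have sg: "\<sigma> g \<in> carrier_mat n n" "\<rho> g \<in> carrier_mat m m" using rep_carrier[OF sr g] rep_carrier[OF rr g] by auto
    obtain a where a: "w = T *\<^sub>v a" "a \<in> carrier_vec n" using w I_def by auto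
    have "\<rho> g *\<^sub>v w = (\<rho> g * T) *\<^sub>v a" using sg T a by auto
    also have "\<dots> = (T * \<sigma> g) *\<^sub>v a" using inter g by simp
    also have "\<dots> = T *\<^sub>v (\<sigma> g *\<^sub>v a)" using sg T a by auto
    finally show ?thesis using a sg unfolding I_def by auto
  qed
  have "I \<noteq> {0\<^sub>v m}"
  proof
    assume "I = {0\<^sub>v m}"
    hence "T *\<^sub>v unit_vec n j = 0\<^sub>v m" if "j < n" for j
      using unit_vec_carrier[of n j] unfolding I_def by blast
    hence "T = 0\<^sub>m m n" using zero_col_mat[OF T] by blast
    with nz show False by simp
  qed
  hence I1: "I = carrier_vec m" using irred_subspace[OF r Is Ii] by blast
  have surj: "\<exists>v\<in>carrier_vec n. T *\<^sub>v v = u" if "u \<in> carrier_vec m" for u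
  proof -
    have "u \<in> I" using that I1 by simp
    then show ?thesis unfolding I_def by blast
  qed
  obtain B where B: "B \<in> carrier_mat n m" "T * B = 1\<^sub>m m" "B * T = 1\<^sub>m n"
    using inj_surj_inverse[OF T inj surj] by blast
  have "mat_trace (\<rho> g) = mat_trace (\<sigma> g)" if g: "g \<in> carrier G" for g
  proof -
    have sg: "\<sigma> g \<in> carrier_mat n n" "\<rho> g \<in> carrier_mat m m" using rep_carrier[OF sr g] rep_carrier[OF rr g] by auto
    have "mat_trace (\<rho> g) = mat_trace (\<rho> g * (T * B))" using B sg by simp
    also have "\<rho> g * (T * B) = (T * \<sigma> g) * B" using inter[OF g] sg T B
      by (metis assoc_mult_mat)
    also have "mat_trace \<dots> = mat_trace (B * (T * \<sigma> g))"
      using sg T B by (intro mat_trace_mult_comm[of _ m n]) auto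
    also have "B * (T * \<sigma> g) = \<sigma> g" using sg T B
      by (metis assoc_mult_mat left_mult_one_mat)
    finally show ?thesis .
  qed
  then show ?thesis unfolding character_def by auto
qed

lemma complex_eigenvector_exists:
  fixes A :: "complex mat"
  assumes A: "A \<in> carrier_mat n n" and n: "n > 0"
  shows "\<exists>a v. v \<in> carrier_vec n \<and> v \<noteq> 0\<^sub>v n \<and> A *\<^sub>v v = a \<cdot>\<^sub>v v"
proof -
  obtain as where cp: "char_poly A = (\<Prod>a\<leftarrow>as. [:- a, 1:])" and len: "length as = n"
    using char_poly_factorized[OF A] by blast
  then obtain a rest where as: "as = a # rest" using n by (cases as) auto
  have "poly (char_poly A) a = 0" unfolding cp as by simp
  hence "eigenvalue A a" using eigenvalue_root_char_poly[OF A] by simp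
  then show ?thesis unfolding eigenvalue_def eigenvector_def using A by auto
qed

lemma schur_scalar:
  assumes r: "irred_rep G n \<rho>" and A: "A \<in> carrier_mat n n"
   and comm: "\<And>g. g \<in> carrier G \<Longrightarrow> \<rho> g * A = A * \<rho> g"
  shows "\<exists>c. A = c \<cdot>\<^sub>m 1\<^sub>m n"
proof -
  have rr: "is_rep G n \<rho>" and n: "n > 0" using r unfolding irred_rep_def by auto
  obtain a v where v: "v \<in> carrier_vec n" "v \<noteq> 0\<^sub>v n" "A *\<^sub>v v = a \<cdot>\<^sub>v v"
    using complex_eigenvector_exists[OF A n] by blast
  define K where "K = {v \<in> carrier_vec n. A *\<^sub>v v = a \<cdot>\<^sub>v v}"
  have Ks: "is_subspace n K" unfolding is_subspace_def K_def using A
    by (auto simp: mult_add_distrib_mat_vec mult_mat_vec smult_add_distrib_vec smult_smult_assoc mult.commute)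
  have Ki: "\<rho> g *\<^sub>v w \<in> K" if g: "g \<in> carrier G" and w: "w \<in> K" for g w
  proof -
    have sg: "\<rho> g \<in> carrier_mat n n" using rep_carrier[OF rr g] by auto
    have "A *\<^sub>v (\<rho> g *\<^sub>v w) = (A * \<rho> g) *\<^sub>v w" using sg A w K_def by auto
    also have "\<dots> = (\<rho> g * A) *\<^sub>v w" using comm g by simp
    also have "\<dots> = \<rho> g *\<^sub>v (A *\<^sub>v w)" using sg A w K_def by auto
    also have "\<dots> = a \<cdot>\<^sub>v (\<rho> g *\<^sub>v w)" using w K_def sg by (auto simp: mult_mat_vec)
    finally show ?thesis using w sg unfolding K_def by auto
  qed
  have "K \<noteq> {0\<^sub>v n}" using v unfolding K_def by blast
  hence K1: "K = carrier_vec n" using irred_subspace[OF r Ks Ki] by blast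
  have "A = a \<cdot>\<^sub>m 1\<^sub>m n"
  proof (rule mat_col_eqI)
    fix j assume "j < dim_col (a \<cdot>\<^sub>m 1\<^sub>m n)"
    hence j: "j < n" by simp
    have "col A j = A *\<^sub>v unit_vec n j" using mat_mult_unit_vec[OF A j] by simp
    also have "\<dots> = a \<cdot>\<^sub>v unit_vec n j" using K1 unit_vec_carrier[of n j] unfolding K_def by blast
    also have "\<dots> = col (a \<cdot>\<^sub>m 1\<^sub>m n) j" using j by (auto simp: col_def unit_vec_def)
    finally show "col A j = col (a \<cdot>\<^sub>m 1\<^sub>m n) j" .
  qed (use A in auto)
  then show ?thesis by blast
qed


definition ip :: "('a, 'b) monoid_scheme \<Rightarrow> ('a \<Rightarrow> complex) \<Rightarrow> ('a \<Rightarrow> complex) \<Rightarrow> complex" where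
  "ip G f k = (\<Sum>g\<in>carrier G. f g * k (inv\<^bsub>G\<^esub> g))"

definition Tmat :: "('a, 'b) monoid_scheme \<Rightarrow> nat \<Rightarrow> nat \<Rightarrow> ('a \<Rightarrow> complex mat) \<Rightarrow> ('a \<Rightarrow> complex mat) \<Rightarrow> nat \<Rightarrow> nat \<Rightarrow> complex mat" where
  "Tmat G m n \<rho> \<sigma> a b = mat m n (\<lambda>(i,j). \<Sum>g\<in>carrier G. \<rho> g $$ (i,a) * \<sigma> (inv\<^bsub>G\<^esub> g) $$ (b,j))"

context group
begin

lemma sum_group_reindex_left:
  assumes "h \<in> carrier G"
  shows "(\<Sum>g\<in>carrier G. F g) = (\<Sum>g\<in>carrier G. F (h \<otimes> g))"
proof -
  have "inj_on (\<lambda>g. h \<otimes> g) (carrier G)" using assms by (auto simp: inj_on_def)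
  moreover have "(\<lambda>g. h \<otimes> g) ` carrier G = carrier G" using assms surj_const_mult by blast
  ultimately show ?thesis using sum.reindex[of "\<lambda>g. h \<otimes> g" "carrier G" F] by simp
qed

lemma Tmat_intertwines:
  assumes r: "is_rep G m \<rho>" and s: "is_rep G n \<sigma>" and h: "h \<in> carrier G"
    and a: "a < m" and b: "b < n"
  shows "\<rho> h * Tmat G m n \<rho> \<sigma> a b = Tmat G m n \<rho> \<sigma> a b * \<sigma> h"
proof (rule eq_matI)
  let ?T = "Tmat G m n \<rho> \<sigma> a b"
  have Tc: "?T \<in> carrier_mat m n" unfolding Tmat_def by auto
  have rh: "\<rho> h \<in> carrier_mat m m" and sh: "\<sigma> h \<in> carrier_mat n n" using rep_carrier[OF r h] rep_carrier[OF s h] by auto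
  fix i j assume "i < dim_row (?T * \<sigma> h)" "j < dim_col (?T * \<sigma> h)"
  hence i: "i < m" and j: "j < n" using Tc sh by auto
  have "(\<rho> h * ?T) $$ (i,j) = (\<Sum>k<m. \<rho> h $$ (i,k) * (\<Sum>g\<in>carrier G. \<rho> g $$ (k,a) * \<sigma> (inv g) $$ (b,j)))"
    using mult_entry[OF rh Tc i j] i j unfolding Tmat_def by simp
  also have "\<dots> = (\<Sum>g\<in>carrier G. (\<Sum>k<m. \<rho> h $$ (i,k) * \<rho> g $$ (k,a)) * \<sigma> (inv g) $$ (b,j))"
    by (simp add: sum_distrib_left sum_distrib_right mult.assoc) (rule sum.swap)
  also have "\<dots> = (\<Sum>g\<in>carrier G. \<rho> (h \<otimes> g) $$ (i,a) * \<sigma> (inv g) $$ (b,j))"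
  proof (rule sum.cong[OF refl])
    fix g assume g: "g \<in> carrier G"
    show "(\<Sum>k<m. \<rho> h $$ (i,k) * \<rho> g $$ (k,a)) * \<sigma> (inv g) $$ (b,j) = \<rho> (h \<otimes> g) $$ (i,a) * \<sigma> (inv g) $$ (b,j)"
      using rep_mult[OF r h g] mult_entry[OF rh rep_carrier[OF r g] i, of a] a by simp
  qed
  also have "\<dots> = (\<Sum>g\<in>carrier G. \<rho> g $$ (i,a) * \<sigma> (inv g \<otimes> h) $$ (b,j))"
  proof -
    have "(\<Sum>g\<in>carrier G. \<rho> g $$ (i,a) * \<sigma> (inv g \<otimes> h) $$ (b,j)) =
          (\<Sum>g\<in>carrier G. \<rho> (h \<otimes> g) $$ (i,a) * \<sigma> (inv (h \<otimes> g) \<otimes> h) $$ (b,j))"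
      by (rule sum_group_reindex_left[OF h])
    also have "\<dots> = (\<Sum>g\<in>carrier G. \<rho> (h \<otimes> g) $$ (i,a) * \<sigma> (inv g) $$ (b,j))"
      using h by (intro sum.cong refl) (simp add: inv_mult_group m_assoc)
    finally show ?thesis by simp
  qed
  also have "\<dots> = (\<Sum>g\<in>carrier G. \<Sum>k<n. \<rho> g $$ (i,a) * \<sigma> (inv g) $$ (b,k) * \<sigma> h $$ (k,j))"
  proof (rule sum.cong[OF refl])
    fix g assume g: "g \<in> carrier G"
    show "\<rho> g $$ (i,a) * \<sigma> (inv g \<otimes> h) $$ (b,j) = (\<Sum>k<n. \<rho> g $$ (i,a) * \<sigma> (inv g) $$ (b,k) * \<sigma> h $$ (k,j))"
      using rep_mult[OF s inv_closed[OF g] h] mult_entry[OF rep_carrier[OF s inv_closed[OF g]] sh b j]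
      by (simp add: sum_distrib_left mult.assoc)
  qed
  also have "\<dots> = (\<Sum>k<n. (\<Sum>g\<in>carrier G. \<rho> g $$ (i,a) * \<sigma> (inv g) $$ (b,k)) * \<sigma> h $$ (k,j))"
    by (subst sum.swap) (simp add: sum_distrib_right)
  also have "\<dots> = (?T * \<sigma> h) $$ (i,j)"
    using mult_entry[OF Tc sh i j] i j unfolding Tmat_def by simp
  finally show "(\<rho> h * ?T) $$ (i,j) = (?T * \<sigma> h) $$ (i,j)" .
qed (use rep_carrier[OF r h] rep_carrier[OF s h] in \<open>auto simp: Tmat_def\<close>)


lemma character_as_sum:
  assumes r: "is_rep G m \<rho>" and g: "g \<in> carrier G"
  shows "character G \<rho> g = (\<Sum>a<m. \<rho> g $$ (a,a))"
  using rep_carrier[OF r g] g unfolding character_def mat_trace_def by auto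

lemma ip_chars_as_sum:
  assumes r: "is_rep G m \<rho>" and s: "is_rep G n \<sigma>"
  shows "ip G (character G \<rho>) (character G \<sigma>) = (\<Sum>a<m. \<Sum>b<n. Tmat G m n \<rho> \<sigma> a b $$ (a,b))"
proof -
  have "ip G (character G \<rho>) (character G \<sigma>) =
     (\<Sum>g\<in>carrier G. (\<Sum>a<m. \<rho> g $$ (a,a)) * (\<Sum>b<n. \<sigma> (inv g) $$ (b,b)))"
    unfolding ip_def by (intro sum.cong refl) (simp add: character_as_sum[OF r] character_as_sum[OF s])
  also have "\<dots> = (\<Sum>g\<in>carrier G. \<Sum>a<m. \<Sum>b<n. \<rho> g $$ (a,a) * \<sigma> (inv g) $$ (b,b))"
    by (simp add: sum_product)
  also have "\<dots> = (\<Sum>a<m. \<Sum>g\<in>carrier G. \<Sum>b<n. \<rho> g $$ (a,a) * \<sigma> (inv g) $$ (b,b))"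
    by (rule sum.swap)
  also have "\<dots> = (\<Sum>a<m. \<Sum>b<n. \<Sum>g\<in>carrier G. \<rho> g $$ (a,a) * \<sigma> (inv g) $$ (b,b))"
    by (intro sum.cong refl) (rule sum.swap)
  also have "\<dots> = (\<Sum>a<m. \<Sum>b<n. Tmat G m n \<rho> \<sigma> a b $$ (a,b))"
    unfolding Tmat_def by (intro sum.cong refl) simp
  finally show ?thesis .
qed

lemma orth_diff:
  assumes r: "irred_rep G m \<rho>" and s: "irred_rep G n \<sigma>"
    and ne: "character G \<rho> \<noteq> character G \<sigma>"
  shows "ip G (character G \<rho>) (character G \<sigma>) = 0"
proof -
  have rr: "is_rep G m \<rho>" and sr: "is_rep G n \<sigma>" using r s unfolding irred_rep_def by auto
  have "Tmat G m n \<rho> \<sigma> a b = 0\<^sub>m m n" if a: "a < m" and b: "b < n" for a b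
  proof (rule ccontr)
    assume "Tmat G m n \<rho> \<sigma> a b \<noteq> 0\<^sub>m m n"
    from schur_nonzero[OF is_group r s _ _ this] Tmat_intertwines[OF rr sr _ a b] ne
    show False by (auto simp: Tmat_def)
  qed
  hence "Tmat G m n \<rho> \<sigma> a b $$ (a,b) = 0" if "a < m" "b < n" for a b using that by simp
  then show ?thesis unfolding ip_chars_as_sum[OF rr sr] by simp
qed

lemma orth_same:
  assumes r: "irred_rep G m \<rho>"
  shows "ip G (character G \<rho>) (character G \<rho>) = of_nat (card (carrier G))"
proof -
  have rr: "is_rep G m \<rho>" and m: "m > 0" using r unfolding irred_rep_def by auto
  have diag: "Tmat G m m \<rho> \<rho> a a $$ (a,a) = of_nat (card (carrier G)) / of_nat m" if a: "a < m" for a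
  proof -
    let ?T = "Tmat G m m \<rho> \<rho> a a"
    have Tc: "?T \<in> carrier_mat m m" unfolding Tmat_def by simp
    obtain c where c: "?T = c \<cdot>\<^sub>m 1\<^sub>m m"
      using schur_scalar[OF r Tc] Tmat_intertwines[OF rr rr _ a a] by metis
    have "mat_trace ?T = (\<Sum>i<m. \<Sum>g\<in>carrier G. \<rho> (inv g) $$ (a,i) * \<rho> g $$ (i,a))"
      unfolding mat_trace_def Tmat_def by (simp add: mult.commute)
    also have "\<dots> = (\<Sum>g\<in>carrier G. (\<rho> (inv g) * \<rho> g) $$ (a,a))"
      by (subst sum.swap) (intro sum.cong refl, simp add: mult_entry[OF rep_carrier[OF rr] rep_carrier[OF rr] a a])
    also have "\<dots> = (\<Sum>g\<in>carrier G. 1)"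
      by (intro sum.cong refl) (simp add: rep_inv_left[OF is_group rr] a)
    finally have t1: "mat_trace ?T = of_nat (card (carrier G))" by simp
    have "mat_trace ?T = c * of_nat m" unfolding c mat_trace_def by simp
    hence "c = of_nat (card (carrier G)) / of_nat m" using t1 m by (simp add: field_simps)
    then show ?thesis using c a by simp
  qed
  have off: "Tmat G m m \<rho> \<rho> a b $$ (a,b) = 0" if a: "a < m" and b: "b < m" and ab: "a \<noteq> b" for a b
  proof -
    let ?T = "Tmat G m m \<rho> \<rho> a b"
    have Tc: "?T \<in> carrier_mat m m" unfolding Tmat_def by simp
    obtain c where c: "?T = c \<cdot>\<^sub>m 1\<^sub>m m"
      using schur_scalar[OF r Tc] Tmat_intertwines[OF rr rr _ a b] by metis
    then show ?thesis using a b ab by simp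
  qed
  have "ip G (character G \<rho>) (character G \<rho>) = (\<Sum>a<m. Tmat G m m \<rho> \<rho> a a $$ (a,a))"
    unfolding ip_chars_as_sum[OF rr rr]
    by (intro sum.cong refl) (auto simp: off if_distrib cong: if_cong intro: sum.neutral
          simp add: sum.remove[of "{..<m}" _ "\<lambda>b. Tmat G m m \<rho> \<rho> _ b $$ (_, b)"])
  also have "\<dots> = of_nat (card (carrier G))" using m by (simp add: diag)
  finally show ?thesis .
qed

lemma irr_char:
  assumes "\<chi> \<in> Irr G"
  obtains m \<rho> where "irred_rep G m \<rho>" "\<chi> = character G \<rho>"
  using assms unfolding Irr_def by blast

lemma orth_Irr:
  assumes "\<chi> \<in> Irr G" "\<psi> \<in> Irr G"
  shows "ip G \<chi> \<psi> = (if \<chi> = \<psi> then of_nat (card (carrier G)) else 0)"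
  using assms by (elim irr_char) (auto simp: orth_same orth_diff)

end


lemma ut_mult:
  fixes B C :: "complex mat"
  assumes B: "B \<in> carrier_mat n n" and C: "C \<in> carrier_mat n n"
    and uB: "upper_triangular B" and uC: "upper_triangular C"
  shows "upper_triangular (B * C)" "\<And>i. i < n \<Longrightarrow> (B * C) $$ (i,i) = B $$ (i,i) * C $$ (i,i)"
proof -
  show "upper_triangular (B * C)" unfolding upper_triangular_def
  proof (intro allI impI)
    fix i j assume i: "i < dim_row (B * C)" and ji: "j < i"
    hence i': "i < n" using B by simp
    have "(B * C) $$ (i,j) = (\<Sum>k<n. B $$ (i,k) * C $$ (k,j))" using mult_entry[OF B C i'] ji i' by simp
    also have "\<dots> = 0"
    proof (rule sum.neutral, intro ballI)
      fix k assume "k \<in> {..<n}"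
      hence k: "k < n" by simp
      show "B $$ (i,k) * C $$ (k,j) = 0"
      proof (cases "k < i")
        case True then show ?thesis using uB i' B by auto
      next
        case False
        have "C $$ (k,j) = 0" using uC k C ji False by (intro upper_triangularD) auto
        then show ?thesis by simp
      qed
    qed
    finally show "(B * C) $$ (i,j) = 0" .
  qed
  fix i assume i: "i < n"
  have "(B * C) $$ (i,i) = (\<Sum>k<n. B $$ (i,k) * C $$ (k,i))" using mult_entry[OF B C i i] by simp
  also have "\<dots> = (\<Sum>k<n. if k = i then B $$ (i,i) * C $$ (i,i) else 0)"
  proof (rule sum.cong[OF refl])
    fix k assume "k \<in> {..<n}"
    hence k: "k < n" by simp
    show "B $$ (i,k) * C $$ (k,i) = (if k = i then B $$ (i,i) * C $$ (i,i) else 0)"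
    proof (cases "k < i")
      case True then show ?thesis using uB i B by auto
    next
      case False
      show ?thesis
      proof (cases "k = i")
        case False with \<open>\<not> k < i\<close> have "i < k" by simp
        have "C $$ (k,i) = 0" using uC k C \<open>i < k\<close> by (intro upper_triangularD) auto
        then show ?thesis using False by simp
      qed simp
    qed
  qed
  also have "\<dots> = B $$ (i,i) * C $$ (i,i)" using i by simp
  finally show "(B * C) $$ (i,i) = B $$ (i,i) * C $$ (i,i)" .
qed

lemma ut_pow:
  fixes B :: "complex mat"
  assumes B: "B \<in> carrier_mat n n" and uB: "upper_triangular B"
  shows "upper_triangular (B ^\<^sub>m k) \<and> (\<forall>i<n. (B ^\<^sub>m k) $$ (i,i) = (B $$ (i,i)) ^ k)"
proof (induction k)
  case 0
  then show ?case using B by auto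
next
  case (Suc k)
  have Bk: "B ^\<^sub>m k \<in> carrier_mat n n" using B by simp
  show ?case using ut_mult[OF Bk B] Suc uB by simp
qed

lemma cnj_root_unity:
  fixes b :: complex
  assumes "b ^ N = 1" "N > 0"
  shows "b ^ (N - 1) = cnj b"
proof -
  have "cmod b ^ N = 1" using assms by (metis norm_one norm_power)
  hence "cmod b = 1" using assms by (metis norm_ge_zero power_eq_1_iff zero_less_iff_neq_zero)
  hence bc: "b * cnj b = 1" using complex_norm_square[of b] by simp
  have "b ^ (N - 1) = b ^ (N - 1) * (b * cnj b)" using bc by simp
  also have "\<dots> = b ^ N * cnj b" using assms(2) by (simp add: power_eq_if mult.assoc)
  finally show ?thesis using assms by simp
qed

context group
begin

lemma rep_pow:
  assumes r: "is_rep G n \<rho>" and g: "g \<in> carrier G"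
  shows "\<rho> (g [^] k) = \<rho> g ^\<^sub>m k"
proof (induction k)
  case 0 then show ?case using rep_one[OF r] rep_carrier[OF r g] by simp
next
  case (Suc k) then show ?case using rep_mult[OF r] g by simp
qed

lemma char_inv_cnj:
  assumes fin: "finite (carrier G)" and r: "is_rep G n \<rho>" and g: "g \<in> carrier G"
  shows "character G \<rho> (inv g) = cnj (character G \<rho> g)"
proof -
  let ?A = "\<rho> g"
  let ?N = "card (carrier G)"
  have A: "?A \<in> carrier_mat n n" using rep_carrier[OF r g] .
  obtain as where "char_poly ?A = (\<Prod>a\<leftarrow>as. [:- a, 1:])" using char_poly_factorized[OF A] by blast
  then obtain B where B: "B \<in> carrier_mat n n" "upper_triangular B" "similar_mat ?A B"
    using schur_decomposition_exists[OF A] by blast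
  then obtain P Q where w: "similar_mat_wit ?A B P Q" unfolding similar_mat_def by blast
  hence PQ: "P \<in> carrier_mat n n" "Q \<in> carrier_mat n n" "P * Q = 1\<^sub>m n" "Q * P = 1\<^sub>m n"
    using A unfolding similar_mat_wit_def Let_def by auto
  have Npos: "?N > 0" using fin by (auto simp: card_gt_0_iff)
  have "?A ^\<^sub>m ?N = 1\<^sub>m n" using rep_pow[OF r g, of ?N] pow_order_eq_1[OF g, unfolded Coset.order_def] rep_one[OF r] by simp
  hence "P * B ^\<^sub>m ?N * Q = 1\<^sub>m n" using similar_mat_wit_pow_id[OF w] by simp
  hence e1: "Q * (P * B ^\<^sub>m ?N * Q) * P = Q * P" using PQ by simp
  have e2: "Q * (P * B ^\<^sub>m ?N * Q) * P = (Q * P) * B ^\<^sub>m ?N * (Q * P)"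
  proof -
    have c: "B ^\<^sub>m ?N \<in> carrier_mat n n" using B by simp
    have c1: "P * B ^\<^sub>m ?N * Q \<in> carrier_mat n n" using PQ c by simp
    have "Q * (P * B ^\<^sub>m ?N * Q) * P = Q * ((P * B ^\<^sub>m ?N * Q) * P)"
      using c1 PQ by (simp only: assoc_mult_mat[OF PQ(2) c1 PQ(1)])
    also have "\<dots> = (Q * P) * B ^\<^sub>m ?N * (Q * P)"
      using PQ(1,2) c by (simp add: assoc_mult_mat[of _ n n _ n _ n])
    finally show ?thesis .
  qed
  have e3: "(Q * P) * B ^\<^sub>m ?N * (Q * P) = B ^\<^sub>m ?N" using PQ B by simp
  have BN: "B ^\<^sub>m ?N = 1\<^sub>m n" using e1 e2 e3 PQ by simp
  have diag: "(B $$ (i,i)) ^ ?N = 1" if "i < n" for i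
    using ut_pow[OF B(1,2), of ?N] BN that by auto
  have tr: "mat_trace (?A ^\<^sub>m k) = (\<Sum>i<n. (B $$ (i,i)) ^ k)" for k
  proof -
    have "mat_trace (?A ^\<^sub>m k) = mat_trace (P * (B ^\<^sub>m k * Q))"
      using similar_mat_wit_pow_id[OF w] PQ B by (simp add: assoc_mult_mat[of _ n n _ n _ n])
    also have "\<dots> = mat_trace ((B ^\<^sub>m k * Q) * P)"
      using PQ B by (intro mat_trace_mult_comm[of _ n n]) auto
    also have "\<dots> = mat_trace (B ^\<^sub>m k)" using PQ B by (simp add: assoc_mult_mat[of _ n n _ n _ n])
    also have "\<dots> = (\<Sum>i<n. (B $$ (i,i)) ^ k)" unfolding mat_trace_def using ut_pow[OF B(1,2), of k] B by simp
    finally show ?thesis .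
  qed
  have invg: "inv g = g [^] (?N - 1)"
  proof -
    have "g [^] (?N - 1) \<otimes> g = g [^] ?N" using Npos g by (metis Suc_diff_1 nat_pow_Suc)
    hence "g [^] (?N - 1) \<otimes> g = \<one>" using pow_order_eq_1[OF g, unfolded Coset.order_def] by simp
    thus ?thesis using g by (metis inv_equality nat_pow_closed)
  qed
  have "character G \<rho> (inv g) = mat_trace (?A ^\<^sub>m (?N - 1))"
    unfolding character_def using invg g rep_pow[OF r g] by simp
  also have "\<dots> = (\<Sum>i<n. cnj (B $$ (i,i)))" unfolding tr using diag cnj_root_unity Npos by simp
  also have "\<dots> = cnj (mat_trace (?A ^\<^sub>m 1))" unfolding tr by simp
  also have "\<dots> = cnj (character G \<rho> g)" unfolding character_def using g A by simp
  finally show ?thesis .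
qed

end


context group
begin

lemma Irr_rep:
  assumes "\<chi> \<in> Irr G"
  obtains n \<rho> where "is_rep G n \<rho>" "n > 0" "\<chi> = character G \<rho>"
  using assms unfolding Irr_def irred_rep_def by blast

lemma Irr_inv:
  assumes fin: "finite (carrier G)" and chi: "\<chi> \<in> Irr G" and g: "g \<in> carrier G"
  shows "\<chi> (inv g) = cnj (\<chi> g)"
proof -
  obtain n \<rho> where r: "is_rep G n \<rho>" and c: "\<chi> = character G \<rho>" using chi by (elim Irr_rep)
  show ?thesis unfolding c by (rule char_inv_cnj[OF fin r g])
qed

lemma Irr_out: "\<chi> \<in> Irr G \<Longrightarrow> g \<notin> carrier G \<Longrightarrow> \<chi> g = 0"
  by (elim Irr_rep) (simp add: character_def)

lemma Irr_deg:
  assumes "\<chi> \<in> Irr G"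
  shows "\<chi> \<one> = of_real (Re (\<chi> \<one>)) \<and> Re (\<chi> \<one>) \<ge> 1"
proof -
  obtain n \<rho> where r: "is_rep G n \<rho>" "n > 0" "\<chi> = character G \<rho>" using assms by (elim Irr_rep)
  then have "\<chi> \<one> = of_nat n" using character_one[OF r(1) one_closed] by simp
  then show ?thesis using \<open>n > 0\<close> by simp
qed

lemma hip_Irr:
  assumes fin: "finite (carrier G)" and chi: "\<chi> \<in> Irr G" and psi: "\<psi> \<in> Irr G"
  shows "(\<Sum>g\<in>carrier G. \<chi> g * cnj (\<psi> g)) = (if \<chi> = \<psi> then of_nat (card (carrier G)) else 0)"
proof -
  have "(\<Sum>g\<in>carrier G. \<chi> g * cnj (\<psi> g)) = ip G \<chi> \<psi>"
    unfolding ip_def by (intro sum.cong refl) (simp add: Irr_inv[OF fin psi])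
  then show ?thesis using orth_Irr[OF chi psi] by simp
qed

lemma Irr_subset_card:
  assumes fin: "finite (carrier G)" and F: "F \<subseteq> Irr G" "finite F"
  shows "card F \<le> card (carrier G)"
proof -
  define d where "d \<chi> = Re (\<chi> \<one>)" for \<chi> :: "'a \<Rightarrow> complex"
  have dd: "\<chi> \<one> = of_real (d \<chi>)" "d \<chi> \<ge> 1" if "\<chi> \<in> F" for \<chi>
    using Irr_deg[of \<chi>] that F unfolding d_def by auto
  define u where "u g = (\<Sum>\<chi>\<in>F. of_real (d \<chi>) * \<chi> g)" for g
  define S where "S = (\<Sum>\<chi>\<in>F. d \<chi> ^ 2)"
  have u1: "u \<one> = of_real S" unfolding u_def S_def
    by (simp add: dd power2_eq_square cong: sum.cong)
  have "(\<Sum>g\<in>carrier G. u g * cnj (u g)) =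
        (\<Sum>g\<in>carrier G. \<Sum>\<chi>\<in>F. \<Sum>\<psi>\<in>F. of_real (d \<chi> * d \<psi>) * (\<chi> g * cnj (\<psi> g)))"
    unfolding u_def by (simp add: sum_product mult_ac)
  also have "\<dots> = (\<Sum>\<chi>\<in>F. \<Sum>g\<in>carrier G. \<Sum>\<psi>\<in>F. of_real (d \<chi> * d \<psi>) * (\<chi> g * cnj (\<psi> g)))"
    by (rule sum.swap)
  also have "\<dots> = (\<Sum>\<chi>\<in>F. \<Sum>\<psi>\<in>F. \<Sum>g\<in>carrier G. of_real (d \<chi> * d \<psi>) * (\<chi> g * cnj (\<psi> g)))"
    by (intro sum.cong refl) (rule sum.swap)
  also have "\<dots> = (\<Sum>\<chi>\<in>F. \<Sum>\<psi>\<in>F. of_real (d \<chi> * d \<psi>) * (\<Sum>g\<in>carrier G. \<chi> g * cnj (\<psi> g)))"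
    by (simp only: sum_distrib_left)
  also have "\<dots> = (\<Sum>\<chi>\<in>F. of_real (d \<chi> * d \<chi>) * of_nat (card (carrier G)))"
  proof (rule sum.cong[OF refl])
    fix \<chi> assume c: "\<chi> \<in> F"
    have "(\<Sum>\<psi>\<in>F. of_real (d \<chi> * d \<psi>) * (\<Sum>g\<in>carrier G. \<chi> g * cnj (\<psi> g))) =
          (\<Sum>\<psi>\<in>F. if \<psi> = \<chi> then of_real (d \<chi> * d \<chi>) * of_nat (card (carrier G)) else 0)"
    proof (rule sum.cong[OF refl])
      fix \<psi> assume "\<psi> \<in> F"
      hence "\<psi> \<in> Irr G" "\<chi> \<in> Irr G" using c F by auto
      then show "of_real (d \<chi> * d \<psi>) * (\<Sum>g\<in>carrier G. \<chi> g * cnj (\<psi> g)) =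
          (if \<psi> = \<chi> then of_real (d \<chi> * d \<chi>) * of_nat (card (carrier G)) else 0)"
        using hip_Irr[OF fin \<open>\<chi> \<in> Irr G\<close> \<open>\<psi> \<in> Irr G\<close>] by auto
    qed
    also have "\<dots> = of_real (d \<chi> * d \<chi>) * of_nat (card (carrier G))" using c F by simp
    finally show "(\<Sum>\<psi>\<in>F. of_real (d \<chi> * d \<psi>) * (\<Sum>g\<in>carrier G. \<chi> g * cnj (\<psi> g))) =
          of_real (d \<chi> * d \<chi>) * of_nat (card (carrier G))" .
  qed
  also have "\<dots> = of_real (S * card (carrier G))"
    unfolding S_def by (simp add: sum_distrib_right power2_eq_square)
  finally have e: "(\<Sum>g\<in>carrier G. u g * cnj (u g)) = of_real (S * card (carrier G))" .
  have "(\<Sum>g\<in>carrier G. u g * cnj (u g)) = (\<Sum>g\<in>carrier G. of_real ((cmod (u g))^2))"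
    by (intro sum.cong refl) (simp only: complex_norm_square)
  also have "\<dots> = of_real (\<Sum>g\<in>carrier G. (cmod (u g))^2)" by (simp only: of_real_sum)
  finally have "(\<Sum>g\<in>carrier G. u g * cnj (u g)) = of_real (\<Sum>g\<in>carrier G. (cmod (u g))^2)" .
  with e have e2: "(\<Sum>g\<in>carrier G. (cmod (u g))^2) = S * card (carrier G)"
    using of_real_eq_iff by metis
  have "(cmod (u \<one>))^2 \<le> (\<Sum>g\<in>carrier G. (cmod (u g))^2)"
    by (rule member_le_sum) (use fin in auto)
  hence "S^2 \<le> S * card (carrier G)" using e2 u1 by simp
  moreover have "real (card F) \<le> S"
  proof -
    have "real (card F) = (\<Sum>\<chi>\<in>F. 1)" by simp
    also have "\<dots> \<le> S" unfolding S_def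
      by (intro sum_mono) (use dd in \<open>auto intro: one_le_power\<close>)
    finally show ?thesis .
  qed
  moreover have "S \<ge> 0" unfolding S_def by (simp add: sum_nonneg)
  ultimately have "S \<le> card (carrier G)"
    by (cases "S = 0") (auto simp: power2_eq_square)
  with \<open>real (card F) \<le> S\<close> have "real (card F) \<le> card (carrier G)" by simp
  then show ?thesis by simp
qed

lemma finite_Irr:
  assumes fin: "finite (carrier G)"
  shows "finite (Irr G)"
proof (rule ccontr)
  assume "infinite (Irr G)"
  then obtain F where F: "F \<subseteq> Irr G" "finite F" "card F = Suc (card (carrier G))"
    using infinite_arbitrarily_large by blast
  show False using Irr_subset_card[OF fin F(1,2)] F(3) by simp
qed

end


definition indep :: "nat \<Rightarrow> complex vec list \<Rightarrow> bool" where
  "indep n ws \<longleftrightarrow> set ws \<subseteq> carrier_vec n \<and>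
     (\<forall>c\<in>carrier_vec (length ws). mat_of_cols n ws *\<^sub>v c = 0\<^sub>v n \<longrightarrow> c = 0\<^sub>v (length ws))"

lemma inj_cols_le:
  fixes A :: "complex mat"
  assumes A: "A \<in> carrier_mat m k"
    and inj: "\<And>v. v \<in> carrier_vec k \<Longrightarrow> A *\<^sub>v v = 0\<^sub>v m \<Longrightarrow> v = 0\<^sub>v k"
  shows "k \<le> m"
proof (rule ccontr)
  assume "\<not> k \<le> m"
  hence km: "m < k" by simp
  define c where "c i = vec k (\<lambda>j. if i < m then A $$ (i,j) else 0)" for i
  define A' where "A' = mat\<^sub>r k k (\<lambda>i. if i = k - 1 then 0\<^sub>v k else c i)"
  have "det A' = 0" unfolding A'_def using km by (intro det_row_0) (auto simp: c_def)
  moreover have A'c: "A' \<in> carrier_mat k k" unfolding A'_def by simp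
  ultimately obtain v where v: "v \<in> carrier_vec k" "v \<noteq> 0\<^sub>v k" "A' *\<^sub>v v = 0\<^sub>v k"
    using det_0_iff_vec_prod_zero[OF A'c] by blast
  have "A *\<^sub>v v = 0\<^sub>v m"
  proof (rule eq_vecI)
    fix i assume "i < dim_vec (0\<^sub>v m :: complex vec)"
    hence i: "i < m" by simp
    have "(A' *\<^sub>v v) $ i = 0" using v i km by simp
    moreover have "(A' *\<^sub>v v) $ i = (A *\<^sub>v v) $ i"
      using i km A v(1) unfolding A'_def c_def by (auto simp: mult_vec_entry[OF A v(1)] scalar_prod_def lessThan_atLeast0 intro!: sum.cong)
    ultimately show "(A *\<^sub>v v) $ i = 0\<^sub>v m $ i" using i by simp
  qed (use A v in auto)
  with inj v show False by blast
qed

lemma indep_length: "indep n ws \<Longrightarrow> length ws \<le> n"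
  unfolding indep_def by (rule inj_cols_le[of "mat_of_cols n ws"]) auto

lemma indep_Nil: "indep n []"
  unfolding indep_def by auto

lemma mat_of_cols_snoc:
  fixes w :: "complex vec"
  assumes ws: "set ws \<subseteq> carrier_vec n" and w: "w \<in> carrier_vec n"
    and c: "c \<in> carrier_vec (Suc (length ws))" and i: "i < n"
  shows "(mat_of_cols n (ws @ [w]) *\<^sub>v c) $ i =
    (mat_of_cols n ws *\<^sub>v vec (length ws) (\<lambda>j. c $ j)) $ i + c $ (length ws) * w $ i"
proof -
  let ?L = "length ws"
  have "(mat_of_cols n (ws @ [w]) *\<^sub>v c) $ i = (\<Sum>j<Suc ?L. (ws @ [w]) ! j $ i * c $ j)"
    using mult_vec_entry[of "mat_of_cols n (ws @ [w])" n "Suc ?L" c i] c i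
    by (simp add: mat_of_cols_def)
  also have "\<dots> = (\<Sum>j<?L. (ws @ [w]) ! j $ i * c $ j) + w $ i * c $ ?L"
    by simp
  also have "(\<Sum>j<?L. (ws @ [w]) ! j $ i * c $ j) = (\<Sum>j<?L. ws ! j $ i * c $ j)"
    by (intro sum.cong refl) (simp add: nth_append)
  also have "(\<Sum>j<?L. ws ! j $ i * c $ j) = (mat_of_cols n ws *\<^sub>v vec ?L (\<lambda>j. c $ j)) $ i"
    using mult_vec_entry[of "mat_of_cols n ws" n ?L "vec ?L (\<lambda>j. c $ j)" i] i
    by (simp add: mat_of_cols_def)
  finally show ?thesis by (simp add: mult.commute[of "w $ i" "c $ length ws"])
qed

lemma ext_max:
  assumes S: "S \<subseteq> carrier_vec n" and ws: "indep n ws" "set ws \<subseteq> S"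
  shows "\<exists>us. indep n (ws @ us) \<and> set us \<subseteq> S \<and> (\<forall>w\<in>S. \<not> indep n (ws @ us @ [w]))"
  using ws
proof (induction "n - length ws" arbitrary: ws rule: less_induct)
  case less
  show ?case
  proof (cases "\<exists>w\<in>S. indep n (ws @ [w])")
    case False
    then show ?thesis using less.prems by (intro exI[of _ "[]"]) auto
  next
    case True
    then obtain w where w: "w \<in> S" "indep n (ws @ [w])" by blast
    have "length (ws @ [w]) \<le> n" using indep_length[OF w(2)] .
    hence lt: "n - length (ws @ [w]) < n - length ws" by simp
    obtain us where us: "indep n ((ws @ [w]) @ us)" "set us \<subseteq> S"
        "\<forall>x\<in>S. \<not> indep n ((ws @ [w]) @ us @ [x])"
      using less.hyps[OF lt w(2)] less.prems w by auto
    show ?thesis using us w by (intro exI[of _ "w # us"]) auto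
  qed
qed

lemma max_spans:
  assumes ws: "indep n ws" and S: "S \<subseteq> carrier_vec n" and max: "\<forall>w\<in>S. \<not> indep n (ws @ [w])"
    and w: "w \<in> S"
  shows "\<exists>c\<in>carrier_vec (length ws). mat_of_cols n ws *\<^sub>v c = w"
proof -
  let ?L = "length ws"
  let ?M = "mat_of_cols n ws"
  have wc: "w \<in> carrier_vec n" using w S by auto
  have wsc: "set ws \<subseteq> carrier_vec n" using ws unfolding indep_def by auto
  from max w have "\<not> indep n (ws @ [w])" by blast
  then obtain c' where c': "c' \<in> carrier_vec (Suc ?L)" "mat_of_cols n (ws @ [w]) *\<^sub>v c' = 0\<^sub>v n"
      "c' \<noteq> 0\<^sub>v (Suc ?L)"
    using wsc wc unfolding indep_def by auto
  define c where "c = vec ?L (\<lambda>j. c' $ j)"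
  define a where "a = c' $ ?L"
  have eq: "(?M *\<^sub>v c) $ i + a * w $ i = 0" if i: "i < n" for i
    using mat_of_cols_snoc[OF wsc wc c'(1) i] c'(2) i unfolding c_def a_def by simp
  have a0: "a \<noteq> 0"
  proof
    assume a: "a = 0"
    have "?M *\<^sub>v c = 0\<^sub>v n" using eq a by (intro eq_vecI) auto
    hence "c = 0\<^sub>v ?L" using ws unfolding indep_def c_def by auto
    hence "c' = 0\<^sub>v (Suc ?L)"
    proof (intro eq_vecI)
      fix i assume "c = 0\<^sub>v ?L" "i < dim_vec (0\<^sub>v (Suc ?L) :: complex vec)"
      then show "c' $ i = 0\<^sub>v (Suc ?L) $ i" using a unfolding c_def a_def
        by (cases "i = ?L") (auto dest!: arg_cong[of _ _ "\<lambda>v. v $ i"])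
    qed (use c' in auto)
    with c' show False by simp
  qed
  define d where "d = (- 1 / a) \<cdot>\<^sub>v c"
  have "?M *\<^sub>v d = w"
  proof (rule eq_vecI)
    fix i assume "i < dim_vec w"
    hence i: "i < n" using wc by simp
    have "(?M *\<^sub>v d) $ i = (- 1 / a) * (?M *\<^sub>v c) $ i"
      unfolding d_def using mult_mat_vec[of ?M n ?L c "- 1 / a"] i by (simp add: c_def)
    also have "\<dots> = w $ i"
    proof -
      have "(?M *\<^sub>v c) $ i = - (a * w $ i)" using eq[OF i] by (simp add: add_eq_0_iff2)
      then show ?thesis using a0 by (simp add: field_simps)
    qed
    finally show "(?M *\<^sub>v d) $ i = w $ i" .
  qed (use wc in auto)
  moreover have "d \<in> carrier_vec ?L" unfolding d_def c_def by simp
  ultimately show ?thesis by blast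
qed

lemma span_in_W:
  assumes W: "is_subspace n W" and ws: "set ws \<subseteq> W"
  shows "\<forall>c\<in>carrier_vec (length ws). mat_of_cols n ws *\<^sub>v c \<in> W"
  using ws
proof (induction ws rule: rev_induct)
  case Nil
  have "mat_of_cols n [] *\<^sub>v c = 0\<^sub>v n" if "c \<in> carrier_vec 0" for c :: "complex vec"
    using that by (intro eq_vecI) (auto simp: mat_of_cols_def scalar_prod_def)
  then show ?case using W unfolding is_subspace_def by auto
next
  case (snoc w ws)
  have Wc: "W \<subseteq> carrier_vec n" using W unfolding is_subspace_def by auto
  have wsc: "set ws \<subseteq> carrier_vec n" and wc: "w \<in> carrier_vec n" using snoc.prems Wc by auto
  show ?case
  proof
    fix c :: "complex vec" assume c: "c \<in> carrier_vec (length (ws @ [w]))"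
    define c0 where "c0 = vec (length ws) (\<lambda>j. c $ j)"
    have "mat_of_cols n (ws @ [w]) *\<^sub>v c = mat_of_cols n ws *\<^sub>v c0 + (c $ length ws) \<cdot>\<^sub>v w"
      using mat_of_cols_snoc[OF wsc wc] c wc unfolding c0_def by (intro eq_vecI) auto
    moreover have "mat_of_cols n ws *\<^sub>v c0 \<in> W" using snoc unfolding c0_def by auto
    moreover have "(c $ length ws) \<cdot>\<^sub>v w \<in> W" using W snoc.prems unfolding is_subspace_def by auto
    ultimately show "mat_of_cols n (ws @ [w]) *\<^sub>v c \<in> W" using W unfolding is_subspace_def by auto
  qed
qed


lemma sum_split_shift0:
  fixes k d :: nat and f :: "nat \<Rightarrow> 'b::comm_monoid_add"
  shows "(\<Sum>l<k + d. f l) = (\<Sum>l<k. f l) + (\<Sum>l<d. f (l + k))"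
proof (induction d)
  case 0 then show ?case by simp
next
  case (Suc d)
  have "(\<Sum>l<k + Suc d. f l) = (\<Sum>l<k + d. f l) + f (k + d)" by simp
  also have "\<dots> = (\<Sum>l<k. f l) + ((\<Sum>l<d. f (l + k)) + f (d + k))"
    using Suc by (simp add: add.commute[of d k] add.assoc)
  also have "\<dots> = (\<Sum>l<k. f l) + (\<Sum>l<Suc d. f (l + k))" by simp
  finally show ?case .
qed

lemma sum_split_shift:
  fixes k n :: nat and f :: "nat \<Rightarrow> 'b::comm_monoid_add"
  assumes "k \<le> n"
  shows "(\<Sum>l<n. f l) = (\<Sum>l<k. f l) + (\<Sum>l<n - k. f (l + k))"
proof -
  have "n = k + (n - k)" using assms by simp
  then show ?thesis using sum_split_shift0[where k=k and d="n - k" and f=f] by metis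
qed

lemma BT:
  assumes r: "is_rep G n \<rho>" and W: "is_subspace n W"
    and inv: "\<And>g w. g \<in> carrier G \<Longrightarrow> w \<in> W \<Longrightarrow> \<rho> g *\<^sub>v w \<in> W"
    and W0: "W \<noteq> {0\<^sub>v n}" and W1: "W \<noteq> carrier_vec n"
  shows "\<exists>k P B. 0 < k \<and> k < n \<and> P \<in> carrier_mat n n \<and> B \<in> carrier_mat n n \<and>
     P * B = 1\<^sub>m n \<and> B * P = 1\<^sub>m n \<and>
     (\<forall>g\<in>carrier G. \<forall>i j. k \<le> i \<longrightarrow> i < n \<longrightarrow> j < k \<longrightarrow> (B * \<rho> g * P) $$ (i,j) = 0)"
proof -
  have Wc: "W \<subseteq> carrier_vec n" using W unfolding is_subspace_def by auto
  obtain ws where ws: "indep n ws" "set ws \<subseteq> W" "\<forall>w\<in>W. \<not> indep n (ws @ [w])"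
    using ext_max[OF Wc indep_Nil] by auto
  have wsc: "set ws \<subseteq> carrier_vec n" using ws Wc by auto
  obtain us where us: "indep n (ws @ us)" "set us \<subseteq> carrier_vec n"
      "\<forall>w\<in>carrier_vec n. \<not> indep n (ws @ us @ [w])"
    using ext_max[OF subset_refl ws(1) wsc] by auto
  define L where "L = ws @ us"
  define k where "k = length ws"
  define P where "P = mat_of_cols n L"
  have Lc: "set L \<subseteq> carrier_vec n" using wsc us unfolding L_def by auto
  have Pc: "P \<in> carrier_mat n (length L)" unfolding P_def by simp
  have spanW: "\<exists>c\<in>carrier_vec k. mat_of_cols n ws *\<^sub>v c = w" if "w \<in> W" for w
    using max_spans[OF ws(1) Wc ws(3) that] unfolding k_def .
  have spanAll: "\<exists>c\<in>carrier_vec (length L). P *\<^sub>v c = v" if "v \<in> carrier_vec n" for v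
    using max_spans[OF us(1) subset_refl _ that] us(3) unfolding P_def L_def by auto
  have injP: "v = 0\<^sub>v (length L)" if "v \<in> carrier_vec (length L)" "P *\<^sub>v v = 0\<^sub>v n" for v
    using us(1) that unfolding indep_def P_def L_def by auto
  obtain B where B: "B \<in> carrier_mat (length L) n" "P * B = 1\<^sub>m n" "B * P = 1\<^sub>m (length L)"
    using inj_surj_inverse[OF Pc injP spanAll] by blast
  have "n \<le> length L"
  proof (rule inj_cols_le[OF B(1)])
    fix v :: "complex vec" assume v: "v \<in> carrier_vec n" "B *\<^sub>v v = 0\<^sub>v (length L)"
    have "v = (P * B) *\<^sub>v v" by (simp only: B(2)) (simp add: v(1))
    also have "\<dots> = P *\<^sub>v (B *\<^sub>v v)" by (rule assoc_mult_mat_vec[OF Pc B(1) v(1)])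
    also have "\<dots> = 0\<^sub>v n" using v Pc by simp
    finally show "v = 0\<^sub>v n" .
  qed
  moreover have "length L \<le> n" using indep_length[OF us(1)] unfolding L_def .
  ultimately have len: "length L = n" by simp
  have Pn: "P \<in> carrier_mat n n" and Bn: "B \<in> carrier_mat n n" and BP: "B * P = 1\<^sub>m n"
    using Pc B len by auto
  have k0: "0 < k"
  proof (rule ccontr)
    assume "\<not> 0 < k"
    hence "ws = []" unfolding k_def by simp
    have "W \<subseteq> {0\<^sub>v n}"
    proof
      fix w assume "w \<in> W"
      then obtain c where c: "c \<in> carrier_vec 0" "mat_of_cols n [] *\<^sub>v c = w"
        using spanW \<open>ws = []\<close> k_def by auto
      have "mat_of_cols n [] *\<^sub>v c = 0\<^sub>v n"
        using c by (intro eq_vecI) (auto simp: mat_of_cols_def scalar_prod_def)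
      then show "w \<in> {0\<^sub>v n}" using c by simp
    qed
    moreover have "0\<^sub>v n \<in> W" using W unfolding is_subspace_def by auto
    ultimately show False using W0 by auto
  qed
  have kn: "k < n"
  proof (rule ccontr)
    assume "\<not> k < n"
    hence "us = []" using len indep_length[OF ws(1)] unfolding k_def L_def by simp
    have "carrier_vec n \<subseteq> W"
    proof
      fix v :: "complex vec" assume "v \<in> carrier_vec n"
      then obtain c where c: "c \<in> carrier_vec (length L)" "P *\<^sub>v c = v" using spanAll by blast
      then show "v \<in> W" using span_in_W[OF W ws(2)] \<open>us = []\<close> unfolding P_def L_def by auto
    qed
    with Wc W1 show False by auto
  qed
  have zero: "(B * \<rho> g * P) $$ (i,j) = 0" if g: "g \<in> carrier G" and i: "k \<le> i" "i < n" and j: "j < k" for g i j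
  proof -
    have rg: "\<rho> g \<in> carrier_mat n n" using rep_carrier[OF r g] .
    have jL: "j < length L" using j kn len by simp
    have Lj: "L ! j = ws ! j" using j unfolding L_def k_def by (simp add: nth_append)
    have wsj: "ws ! j \<in> W" using ws(2) j unfolding k_def by auto
    have Ljc: "L ! j \<in> carrier_vec n" using Lc jL by auto
    have colP: "col P j = ws ! j" unfolding P_def using col_mat_of_cols[OF jL Ljc] Lj by simp
    obtain c where c: "c \<in> carrier_vec k" "mat_of_cols n ws *\<^sub>v c = \<rho> g *\<^sub>v (ws ! j)"
      using spanW[OF inv[OF g wsj]] by blast
    define c' where "c' = vec n (\<lambda>l. if l < k then c $ l else 0)"
    have c'c: "c' \<in> carrier_vec n" unfolding c'_def by simp
    have Pc': "P *\<^sub>v c' = mat_of_cols n ws *\<^sub>v c"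
    proof (rule eq_vecI)
      fix i' assume "i' < dim_vec (mat_of_cols n ws *\<^sub>v c)"
      hence i': "i' < n" by simp
      have "(P *\<^sub>v c') $ i' = (\<Sum>l<n. L ! l $ i' * c' $ l)"
        using mult_vec_entry[OF Pn c'c i'] i' len unfolding P_def by (simp add: mat_of_cols_def)
      also have "\<dots> = (\<Sum>l<k. L ! l $ i' * c' $ l) + (\<Sum>l<n - k. L ! (l + k) $ i' * c' $ (l + k))"
        using kn by (intro sum_split_shift) simp
      also have "(\<Sum>l<n - k. L ! (l + k) $ i' * c' $ (l + k)) = 0"
        by (intro sum.neutral) (auto simp: c'_def)
      also have "(\<Sum>l<k. L ! l $ i' * c' $ l) = (\<Sum>l<k. ws ! l $ i' * c $ l)"
        using kn by (intro sum.cong refl) (auto simp: c'_def L_def k_def nth_append)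
      also have "\<dots> = (mat_of_cols n ws *\<^sub>v c) $ i'"
        using mult_vec_entry[of "mat_of_cols n ws" n k c i'] c(1) i' unfolding k_def
        by (simp add: mat_of_cols_def)
      finally show "(P *\<^sub>v c') $ i' = (mat_of_cols n ws *\<^sub>v c) $ i'" by simp
    qed (use Pn in auto)
    have "(B * \<rho> g * P) $$ (i,j) = col (B * \<rho> g * P) j $ i" using i j kn Bn rg Pn by simp
    also have "col (B * \<rho> g * P) j = (B * \<rho> g) *\<^sub>v col P j"
      using col_mult2[of "B * \<rho> g" n n P n j] Bn rg Pn j kn by simp
    also have "\<dots> = B *\<^sub>v (\<rho> g *\<^sub>v ws ! j)"
      unfolding colP using Bn rg wsj Wc by (intro assoc_mult_mat_vec) auto
    also have "\<dots> = B *\<^sub>v (P *\<^sub>v c')" using c Pc' by simp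
    also have "\<dots> = (B * P) *\<^sub>v c'" using Bn Pn c'c by (simp add: assoc_mult_mat_vec)
    also have "\<dots> = c'" using BP c'c by simp
    finally show ?thesis using i unfolding c'_def by simp
  qed
  show ?thesis
    apply (rule exI[of _ k], rule exI[of _ P], rule exI[of _ B])
    using k0 kn Pn Bn B(2) BP zero by simp
qed


lemma conj_rep:
  assumes r: "is_rep G n \<rho>" and P: "P \<in> carrier_mat n n" and B: "B \<in> carrier_mat n n"
    and PB: "P * B = 1\<^sub>m n" and BP: "B * P = 1\<^sub>m n"
  shows "is_rep G n (\<lambda>g. B * \<rho> g * P)" "\<And>g. g \<in> carrier G \<Longrightarrow> mat_trace (B * \<rho> g * P) = mat_trace (\<rho> g)"
proof -
  have PBX: "P * (B * X) = X" if "X \<in> carrier_mat n n" for X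
  proof -
    have "P * (B * X) = (P * B) * X" using P B that by (simp add: assoc_mult_mat[of _ n n _ n _ n])
    then show ?thesis using PB that by simp
  qed
  show "is_rep G n (\<lambda>g. B * \<rho> g * P)" unfolding is_rep_def
  proof (intro conjI ballI)
    fix g assume g: "g \<in> carrier G"
    show "B * \<rho> g * P \<in> carrier_mat n n" using rep_carrier[OF r g] P B by simp
  next
    show "B * \<rho> \<one>\<^bsub>G\<^esub> * P = 1\<^sub>m n" using rep_one[OF r] BP B by simp
  next
    fix g h assume g: "g \<in> carrier G" and h: "h \<in> carrier G"
    have rg: "\<rho> g \<in> carrier_mat n n" and rh: "\<rho> h \<in> carrier_mat n n"
      using rep_carrier[OF r g] rep_carrier[OF r h] by auto
    have "B * \<rho> g * P * (B * \<rho> h * P) = B * (\<rho> g * (P * (B * (\<rho> h * P))))"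
      using rg rh P B by (simp add: assoc_mult_mat[of _ n n _ n _ n])
    also have "P * (B * (\<rho> h * P)) = \<rho> h * P" using PBX rh P by simp
    also have "B * (\<rho> g * (\<rho> h * P)) = B * (\<rho> g * \<rho> h) * P"
      using rg rh P B by (simp add: assoc_mult_mat[of _ n n _ n _ n])
    finally show "B * \<rho> (g \<otimes>\<^bsub>G\<^esub> h) * P = B * \<rho> g * P * (B * \<rho> h * P)"
      using rep_mult[OF r g h] by simp
  qed
  fix g assume g: "g \<in> carrier G"
  have rg: "\<rho> g \<in> carrier_mat n n" using rep_carrier[OF r g] .
  have "mat_trace (B * \<rho> g * P) = mat_trace (P * (B * \<rho> g))"
    using rg P B by (intro mat_trace_mult_comm[of _ n n]) auto
  also have "\<dots> = mat_trace (\<rho> g)" using PBX rg by simp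
  finally show "mat_trace (B * \<rho> g * P) = mat_trace (\<rho> g)" .
qed

lemma block_reps:
  assumes r: "is_rep G n M" and k: "k \<le> n"
    and z: "\<And>g i j. g \<in> carrier G \<Longrightarrow> k \<le> i \<Longrightarrow> i < n \<Longrightarrow> j < k \<Longrightarrow> M g $$ (i,j) = 0"
  defines "A \<equiv> \<lambda>g. mat k k (\<lambda>(i,j). M g $$ (i,j))"
    and "C \<equiv> \<lambda>g. mat (n - k) (n - k) (\<lambda>(i,j). M g $$ (i + k, j + k))"
  shows "is_rep G k A" "is_rep G (n - k) C"
    "\<And>g. g \<in> carrier G \<Longrightarrow> mat_trace (M g) = mat_trace (A g) + mat_trace (C g)"
proof -
  have Mc: "M g \<in> carrier_mat n n" if "g \<in> carrier G" for g using rep_carrier[OF r that] .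
  show "is_rep G k A" unfolding is_rep_def
  proof (intro conjI ballI)
    show "A \<one>\<^bsub>G\<^esub> = 1\<^sub>m k" unfolding A_def using rep_one[OF r] k by (intro eq_matI) auto
  next
    fix g h assume g: "g \<in> carrier G" and h: "h \<in> carrier G"
    show "A (g \<otimes>\<^bsub>G\<^esub> h) = A g * A h"
    proof (rule eq_matI)
      fix i j assume "i < dim_row (A g * A h)" "j < dim_col (A g * A h)"
      hence i: "i < k" and j: "j < k" unfolding A_def by auto
      have "A (g \<otimes>\<^bsub>G\<^esub> h) $$ (i,j) = (\<Sum>l<n. M g $$ (i,l) * M h $$ (l,j))"
        unfolding A_def using rep_mult[OF r g h] mult_entry[OF Mc[OF g] Mc[OF h]] i j k by simp
      also have "\<dots> = (\<Sum>l<k. M g $$ (i,l) * M h $$ (l,j)) + (\<Sum>l<n-k. M g $$ (i,l+k) * M h $$ (l+k,j))"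
        using k by (rule sum_split_shift)
      also have "(\<Sum>l<n-k. M g $$ (i,l+k) * M h $$ (l+k,j)) = 0"
        using z[OF h] j by (intro sum.neutral) auto
      also have "(\<Sum>l<k. M g $$ (i,l) * M h $$ (l,j)) = (A g * A h) $$ (i,j)"
        unfolding A_def using i j by (subst mult_entry[of _ k k _ k]) auto
      finally show "A (g \<otimes>\<^bsub>G\<^esub> h) $$ (i,j) = (A g * A h) $$ (i,j)" by simp
    qed (auto simp: A_def)
  qed (auto simp: A_def)
  show "is_rep G (n - k) C" unfolding is_rep_def
  proof (intro conjI ballI)
    show "C \<one>\<^bsub>G\<^esub> = 1\<^sub>m (n - k)" unfolding C_def using rep_one[OF r] k by (intro eq_matI) auto
  next
    fix g h assume g: "g \<in> carrier G" and h: "h \<in> carrier G"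
    show "C (g \<otimes>\<^bsub>G\<^esub> h) = C g * C h"
    proof (rule eq_matI)
      fix i j assume "i < dim_row (C g * C h)" "j < dim_col (C g * C h)"
      hence i: "i < n - k" and j: "j < n - k" unfolding C_def by auto
      have "C (g \<otimes>\<^bsub>G\<^esub> h) $$ (i,j) = (\<Sum>l<n. M g $$ (i+k,l) * M h $$ (l,j+k))"
        unfolding C_def using rep_mult[OF r g h] mult_entry[OF Mc[OF g] Mc[OF h]] i j k by simp
      also have "\<dots> = (\<Sum>l<k. M g $$ (i+k,l) * M h $$ (l,j+k)) + (\<Sum>l<n-k. M g $$ (i+k,l+k) * M h $$ (l+k,j+k))"
        using k by (rule sum_split_shift)
      also have "(\<Sum>l<k. M g $$ (i+k,l) * M h $$ (l,j+k)) = 0"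
        using z[OF g] i by (intro sum.neutral) auto
      also have "(\<Sum>l<n-k. M g $$ (i+k,l+k) * M h $$ (l+k,j+k)) = (C g * C h) $$ (i,j)"
        unfolding C_def using i j by (subst mult_entry[of _ "n-k" "n-k" _ "n-k"]) auto
      finally show "C (g \<otimes>\<^bsub>G\<^esub> h) $$ (i,j) = (C g * C h) $$ (i,j)" by simp
    qed (auto simp: C_def)
  qed (auto simp: C_def)
  fix g assume g: "g \<in> carrier G"
  have "mat_trace (M g) = (\<Sum>i<n. M g $$ (i,i))" unfolding mat_trace_def using Mc[OF g] by simp
  also have "\<dots> = (\<Sum>i<k. M g $$ (i,i)) + (\<Sum>i<n-k. M g $$ (i+k,i+k))" using k by (rule sum_split_shift)
  also have "\<dots> = mat_trace (A g) + mat_trace (C g)" unfolding mat_trace_def A_def C_def by simp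
  finally show "mat_trace (M g) = mat_trace (A g) + mat_trace (C g)" .
qed

context group
begin

theorem decomp:
  assumes fin: "finite (carrier G)"
  shows "is_rep G n \<rho> \<Longrightarrow> \<exists>c. \<forall>g. character G \<rho> g = (\<Sum>\<chi>\<in>Irr G. of_nat (c \<chi>) * \<chi> g)"
proof (induction n arbitrary: \<rho> rule: less_induct)
  case (less n)
  note r = less.prems
  have finI: "finite (Irr G)" using finite_Irr[OF fin] .
  show ?case
  proof (cases "n = 0")
    case True
    have "character G \<rho> g = 0" for g
      using rep_carrier[OF r] True unfolding character_def by (auto simp: mat_trace_zero_dim)
    then show ?thesis by (intro exI[of _ "\<lambda>_. 0"]) simp
  next
    case n0: False
    show ?thesis
    proof (cases "irred_rep G n \<rho>")
      case True
      hence cI: "character G \<rho> \<in> Irr G" unfolding Irr_def by blast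
      have "(\<Sum>\<chi>\<in>Irr G. of_nat (if \<chi> = character G \<rho> then 1 else 0) * \<chi> g) = character G \<rho> g" for g
      proof -
        have "(\<Sum>\<chi>\<in>Irr G. of_nat (if \<chi> = character G \<rho> then 1 else 0) * \<chi> g) =
              (\<Sum>\<chi>\<in>Irr G. if \<chi> = character G \<rho> then character G \<rho> g else 0)"
          by (intro sum.cong refl) simp
        also have "\<dots> = character G \<rho> g" using finI cI by simp
        finally show ?thesis .
      qed
      then show ?thesis by (intro exI[of _ "\<lambda>\<chi>. if \<chi> = character G \<rho> then 1 else 0"]) simp
    next
      case False
      then obtain W where W: "is_subspace n W" "\<And>g w. g \<in> carrier G \<Longrightarrow> w \<in> W \<Longrightarrow> \<rho> g *\<^sub>v w \<in> W"
          "W \<noteq> {0\<^sub>v n}" "W \<noteq> carrier_vec n"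
        using r n0 unfolding irred_rep_def by blast
      obtain k P B where kPB: "0 < k" "k < n" "P \<in> carrier_mat n n" "B \<in> carrier_mat n n"
          "P * B = 1\<^sub>m n" "B * P = 1\<^sub>m n"
          "\<And>g i j. g \<in> carrier G \<Longrightarrow> k \<le> i \<Longrightarrow> i < n \<Longrightarrow> j < k \<Longrightarrow> (B * \<rho> g * P) $$ (i,j) = 0"
        using BT[OF r W] by blast
      define M where "M g = B * \<rho> g * P" for g
      have Mr: "is_rep G n M" unfolding M_def using conj_rep[OF r kPB(3,4,5,6)] by simp
      have Mt: "mat_trace (M g) = mat_trace (\<rho> g)" if "g \<in> carrier G" for g
        unfolding M_def using conj_rep(2)[OF r kPB(3,4,5,6) that] .
      define A where "A = (\<lambda>g. mat k k (\<lambda>(i,j). M g $$ (i,j)))"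
      define C where "C = (\<lambda>g. mat (n - k) (n - k) (\<lambda>(i,j). M g $$ (i + k, j + k)))"
      have bl: "is_rep G k A" "is_rep G (n - k) C"
        "\<And>g. g \<in> carrier G \<Longrightarrow> mat_trace (M g) = mat_trace (A g) + mat_trace (C g)"
        using block_reps[OF Mr, of k] kPB(2,7) unfolding A_def C_def M_def by auto
      obtain cA where cA: "\<forall>g. character G A g = (\<Sum>\<chi>\<in>Irr G. of_nat (cA \<chi>) * \<chi> g)"
        using less.IH[OF kPB(2) bl(1)] by blast
      obtain cC where cC: "\<forall>g. character G C g = (\<Sum>\<chi>\<in>Irr G. of_nat (cC \<chi>) * \<chi> g)"
        using less.IH[OF _ bl(2)] kPB(1,2) by auto
      have "character G \<rho> g = (\<Sum>\<chi>\<in>Irr G. of_nat (cA \<chi> + cC \<chi>) * \<chi> g)" for g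
      proof (cases "g \<in> carrier G")
        case True
        have "character G \<rho> g = character G A g + character G C g"
          unfolding character_def using True Mt bl(3) by simp
        then show ?thesis using cA cC by (simp add: sum.distrib distrib_right)
      next
        case False
        then show ?thesis unfolding character_def using Irr_out by simp
      qed
      then show ?thesis by (intro exI[of _ "\<lambda>\<chi>. cA \<chi> + cC \<chi>"]) blast
    qed
  qed
qed

end


context group
begin

lemma decomp_coeff:
  assumes fin: "finite (carrier G)"
    and c: "\<forall>g. character G \<rho> g = (\<Sum>\<chi>\<in>Irr G. of_nat (c \<chi>) * \<chi> g)"
    and chi: "\<chi> \<in> Irr G"
  shows "(\<Sum>g\<in>carrier G. character G \<rho> g * cnj (\<chi> g)) = of_nat (c \<chi>) * of_nat (card (carrier G))"
proof -
  have "(\<Sum>g\<in>carrier G. character G \<rho> g * cnj (\<chi> g)) =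
        (\<Sum>g\<in>carrier G. \<Sum>\<psi>\<in>Irr G. of_nat (c \<psi>) * (\<psi> g * cnj (\<chi> g)))"
    using c by (simp add: sum_distrib_right mult.assoc)
  also have "\<dots> = (\<Sum>\<psi>\<in>Irr G. \<Sum>g\<in>carrier G. of_nat (c \<psi>) * (\<psi> g * cnj (\<chi> g)))"
    by (rule sum.swap)
  also have "\<dots> = (\<Sum>\<psi>\<in>Irr G. of_nat (c \<psi>) * (\<Sum>g\<in>carrier G. \<psi> g * cnj (\<chi> g)))"
    by (simp only: sum_distrib_left)
  also have "\<dots> = (\<Sum>\<psi>\<in>Irr G. if \<psi> = \<chi> then of_nat (c \<chi>) * of_nat (card (carrier G)) else 0)"
    by (intro sum.cong refl) (simp add: hip_Irr[OF fin _ chi])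
  also have "\<dots> = of_nat (c \<chi>) * of_nat (card (carrier G))" using finite_Irr[OF fin] chi by simp
  finally show ?thesis .
qed

lemma triv_rep: "is_rep G 1 (\<lambda>g. 1\<^sub>m 1)"
  unfolding is_rep_def by simp

lemma triv_irred: "irred_rep G 1 (\<lambda>g. 1\<^sub>m 1)"
  unfolding irred_rep_def
proof (intro conjI allI impI triv_rep)
  fix W assume W: "is_subspace 1 W \<and> (\<forall>g\<in>carrier G. \<forall>w\<in>W. 1\<^sub>m 1 *\<^sub>v w \<in> W)"
  show "W = {0\<^sub>v 1} \<or> W = carrier_vec 1"
  proof (cases "W = {0\<^sub>v 1}")
    case False
    have W0: "0\<^sub>v 1 \<in> W" and Wc: "W \<subseteq> carrier_vec 1" using W unfolding is_subspace_def by auto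
    then obtain w where w: "w \<in> W" "w \<noteq> 0\<^sub>v 1" using False by blast
    have wc: "w \<in> carrier_vec 1" using w Wc by auto
    have w0: "w $ 0 \<noteq> 0"
    proof
      assume "w $ 0 = 0"
      hence "w = 0\<^sub>v 1" using wc by (intro eq_vecI) auto
      with w show False by simp
    qed
    have "carrier_vec 1 \<subseteq> W"
    proof
      fix v :: "complex vec" assume v: "v \<in> carrier_vec 1"
      have "v = (v $ 0 / w $ 0) \<cdot>\<^sub>v w" using v wc w0 by (intro eq_vecI) auto
      moreover have "(v $ 0 / w $ 0) \<cdot>\<^sub>v w \<in> W" using W w unfolding is_subspace_def by auto
      ultimately show "v \<in> W" by simp
    qed
    then show ?thesis using Wc by auto
  qed simp
qed simp

lemma triv_char: "character G (\<lambda>g. 1\<^sub>m 1) g = (if g \<in> carrier G then 1 else 0)"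
  unfolding character_def mat_trace_def by simp

lemma triv_Irr: "character G (\<lambda>g. 1\<^sub>m 1) \<in> Irr G"
  unfolding Irr_def using triv_irred by blast

end

lemma restrict_rep:
  assumes "subgroup H G" "is_rep G n \<rho>"
  shows "is_rep (G\<lparr>carrier := H\<rparr>) n \<rho>"
proof -
  have "H \<subseteq> carrier G" using subgroup.subset[OF assms(1)] .
  then show ?thesis using assms(2) unfolding is_rep_def by (simp add: subset_iff)
qed

context group
begin

lemma Irr_restrict_mult:
  assumes fin: "finite (carrier G)" and H: "subgroup H G" and chi: "\<chi> \<in> Irr G"
  shows "\<exists>m n. \<chi> \<one> = of_nat n \<and> m \<le> n \<and> (\<Sum>h\<in>H. \<chi> h) = of_nat (card H * m)"
proof -
  obtain n \<rho> where r: "is_rep G n \<rho>" "n > 0" "\<chi> = character G \<rho>" using chi by (elim Irr_rep)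
  define K where "K = G\<lparr>carrier := H\<rparr>"
  have Kg: "group K" unfolding K_def using subgroup.subgroup_is_group[OF H is_group] .
  have Hc: "H \<subseteq> carrier G" using subgroup.subset[OF H] .
  have finK: "finite (carrier K)" unfolding K_def using finite_subset[OF Hc fin] by simp
  have rK: "is_rep K n \<rho>" unfolding K_def using restrict_rep[OF H r(1)] .
  obtain c where c: "\<forall>g. character K \<rho> g = (\<Sum>\<psi>\<in>Irr K. of_nat (c \<psi>) * \<psi> g)"
    using group.decomp[OF Kg finK rK] by blast
  define one where "one = character K (\<lambda>g. 1\<^sub>m 1)"
  have oneI: "one \<in> Irr K" unfolding one_def using group.triv_Irr[OF Kg] .
  have oneval: "one h = 1" if "h \<in> H" for h unfolding one_def using group.triv_char[OF Kg] that
    by (simp add: K_def)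
  have chiK: "\<chi> h = character K \<rho> h" if "h \<in> H" for h
    using r(3) that Hc unfolding character_def K_def by auto
  have "(\<Sum>h\<in>H. \<chi> h) = (\<Sum>g\<in>carrier K. character K \<rho> g * cnj (one g))"
    unfolding K_def by (simp add: chiK[unfolded K_def] oneval)
  also have "\<dots> = of_nat (c one) * of_nat (card (carrier K))"
    using group.decomp_coeff[OF Kg finK c oneI] .
  finally have S: "(\<Sum>h\<in>H. \<chi> h) = of_nat (card H * c one)" unfolding K_def by simp
  have oneK: "\<one>\<^bsub>K\<^esub> = \<one>" unfolding K_def by simp
  have oneKc: "\<one>\<^bsub>K\<^esub> \<in> carrier K" unfolding K_def using subgroup.one_closed[OF H] by simp
  have "of_nat n = character K \<rho> \<one>\<^bsub>K\<^esub>" using character_one[OF rK oneKc] by simp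
  also have "\<dots> = (\<Sum>\<psi>\<in>Irr K. of_nat (c \<psi>) * \<psi> \<one>\<^bsub>K\<^esub>)" using c by simp
  finally have e: "complex_of_nat n = (\<Sum>\<psi>\<in>Irr K. of_nat (c \<psi>) * \<psi> \<one>\<^bsub>K\<^esub>)" .
  have "real n = Re (\<Sum>\<psi>\<in>Irr K. of_nat (c \<psi>) * \<psi> \<one>\<^bsub>K\<^esub>)" using arg_cong[OF e, of Re] by simp
  also have "\<dots> = (\<Sum>\<psi>\<in>Irr K. real (c \<psi>) * Re (\<psi> \<one>\<^bsub>K\<^esub>))" by (simp add: Re_sum)
  finally have en: "real n = (\<Sum>\<psi>\<in>Irr K. real (c \<psi>) * Re (\<psi> \<one>\<^bsub>K\<^esub>))" .
  have "real (c one) * Re (one \<one>\<^bsub>K\<^esub>) \<le> (\<Sum>\<psi>\<in>Irr K. real (c \<psi>) * Re (\<psi> \<one>\<^bsub>K\<^esub>))"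
  proof (rule member_le_sum)
    show "one \<in> Irr K" by (rule oneI)
    show "finite (Irr K)" using group.finite_Irr[OF Kg finK] .
    fix \<psi> assume "\<psi> \<in> Irr K - {one}"
    hence "1 \<le> Re (\<psi> \<one>\<^bsub>K\<^esub>)" using group.Irr_deg[OF Kg] by blast
    then show "0 \<le> real (c \<psi>) * Re (\<psi> \<one>\<^bsub>K\<^esub>)" by simp
  qed
  moreover have "Re (one \<one>\<^bsub>K\<^esub>) = 1" using oneval[of \<one>] oneK subgroup.one_closed[OF H] by simp
  ultimately have "real (c one) \<le> real n" using en by simp
  hence "c one \<le> n" by simp
  moreover have "\<chi> \<one> = of_nat n" using character_one[OF r(1) one_closed] r(3) by simp
  ultimately show ?thesis using S by blast
qed

end


context group
begin

lemma rcosets_mult_closed: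
  assumes K: "subgroup K G" and X: "X \<in> rcosets K" and g: "g \<in> carrier G"
  shows "X #> g \<in> rcosets K"
proof -
  obtain a where a: "a \<in> carrier G" "X = K #> a" using X unfolding RCOSETS_def by auto
  have "X #> g = K #> (a \<otimes> g)" using a g coset_mult_assoc subgroup.subset[OF K] by simp
  then show ?thesis using rcosetsI[OF subgroup.subset[OF K]] a g by simp
qed

lemma finite_rcosets:
  assumes fin: "finite (carrier G)" and K: "subgroup K G"
  shows "finite (rcosets K)"
  using rcosets_subset_PowG[OF K] fin by (meson finite_Pow_iff finite_subset)

lemma card_filter_sum:
  assumes "finite A"
  shows "of_nat (card {x\<in>A. P x}) * (c::complex) = (\<Sum>x\<in>A. if P x then c else 0)"
proof -
  have "(\<Sum>x\<in>A. if P x then c else 0) = (\<Sum>x\<in>{x\<in>A. P x}. c)"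
    using sum.inter_filter[OF assms, of "\<lambda>_. c" P] by simp
  then show ?thesis by simp
qed

lemma perm_rep:
  assumes fin: "finite (carrier G)" and K: "subgroup K G"
  shows "\<exists>N \<pi>. is_rep G N \<pi> \<and> (\<forall>g\<in>carrier G. mat_trace (\<pi> g) = of_nat (fixX G K g))"
proof -
  have Ksub: "K \<subseteq> carrier G" using subgroup.subset[OF K] .
  define N where "N = card (rcosets K)"
  obtain f where f: "bij_betw f {0..<N} (rcosets K)"
    using ex_bij_betw_nat_finite[OF finite_rcosets[OF fin K]] unfolding N_def by blast
  define \<pi> where "\<pi> g = mat N N (\<lambda>(i,j). if f i #> g = f j then (1::complex) else 0)" for g
  have fR: "f i \<in> rcosets K" if "i < N" for i using f that unfolding bij_betw_def by auto
  have finj: "i = j" if "i < N" "j < N" "f i = f j" for i j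
    using f that unfolding bij_betw_def inj_on_def by auto
  have fsurj: "\<exists>j<N. f j = X" if "X \<in> rcosets K" for X
  proof -
    have "X \<in> f ` {0..<N}" using f that by (simp add: bij_betw_def)
    then obtain j where "j \<in> {0..<N}" "X = f j" by blast
    then show ?thesis by auto
  qed
  have Xc: "X \<subseteq> carrier G" if "X \<in> rcosets K" for X
    using subgroup.rcosets_carrier[OF K is_group that] .
  have rep: "is_rep G N \<pi>" unfolding is_rep_def
  proof (intro conjI ballI)
    fix g assume "g \<in> carrier G" then show "\<pi> g \<in> carrier_mat N N" unfolding \<pi>_def by simp
  next
    show "\<pi> \<one> = 1\<^sub>m N"
    proof (rule eq_matI)
      fix i j assume "i < dim_row (1\<^sub>m N)" "j < dim_col (1\<^sub>m N :: complex mat)"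
      hence i: "i < N" and j: "j < N" by auto
      have "f i #> \<one> = f i" using Xc[OF fR[OF i]] by simp
      then show "\<pi> \<one> $$ (i,j) = 1\<^sub>m N $$ (i,j)" unfolding \<pi>_def using i j finj by auto
    qed (auto simp: \<pi>_def)
  next
    fix g h assume g: "g \<in> carrier G" and h: "h \<in> carrier G"
    show "\<pi> (g \<otimes> h) = \<pi> g * \<pi> h"
    proof (rule eq_matI)
      fix i k assume "i < dim_row (\<pi> g * \<pi> h)" "k < dim_col (\<pi> g * \<pi> h)"
      hence i: "i < N" and k: "k < N" unfolding \<pi>_def by auto
      obtain j0 where j0: "j0 < N" "f j0 = f i #> g"
        using fsurj[OF rcosets_mult_closed[OF K fR[OF i] g]] by blast
      have "(\<pi> g * \<pi> h) $$ (i,k) = (\<Sum>j<N. (if f i #> g = f j then 1 else 0) * (if f j #> h = f k then 1 else 0))"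
        using mult_entry[of "\<pi> g" N N "\<pi> h" N i k] i k unfolding \<pi>_def by simp
      also have "\<dots> = (\<Sum>j<N. if j = j0 then (if f j0 #> h = f k then 1 else 0) else 0)"
      proof (rule sum.cong[OF refl])
        fix j assume "j \<in> {..<N}"
        hence j: "j < N" by simp
        have "(f i #> g = f j) = (j = j0)" using finj[OF j0(1) j] j0 by auto
        then show "(if f i #> g = f j then 1 else 0) * (if f j #> h = f k then 1 else 0) =
            (if j = j0 then (if f j0 #> h = f k then 1 else (0::complex)) else 0)" by auto
      qed
      also have "\<dots> = (if f j0 #> h = f k then 1 else 0)" using j0 by simp
      also have "f j0 #> h = f i #> (g \<otimes> h)" using j0 coset_mult_assoc[OF Xc[OF fR[OF i]] g h] by simp
      finally show "\<pi> (g \<otimes> h) $$ (i,k) = (\<pi> g * \<pi> h) $$ (i,k)" unfolding \<pi>_def using i k by simp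
    qed (auto simp: \<pi>_def)
  qed
  have tr: "mat_trace (\<pi> g) = of_nat (fixX G K g)" if g: "g \<in> carrier G" for g
  proof -
    have "mat_trace (\<pi> g) = (\<Sum>i<N. if f i #> g = f i then 1 else 0)"
      unfolding mat_trace_def \<pi>_def by simp
    also have "\<dots> = of_nat (card {i\<in>{..<N}. f i #> g = f i}) * 1"
      using card_filter_sum[of "{..<N}" "\<lambda>i. f i #> g = f i" 1] by simp
    also have "card {i\<in>{..<N}. f i #> g = f i} = card {X \<in> rcosets K. X #> g = X}"
    proof -
      have inj: "inj_on f {i \<in> {..<N}. f i #> g = f i}"
        using finj unfolding inj_on_def by auto
      have img: "f ` {i \<in> {..<N}. f i #> g = f i} = {X \<in> rcosets K. X #> g = X}"
      proof (intro equalityI subsetI)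
        fix X assume "X \<in> f ` {i \<in> {..<N}. f i #> g = f i}"
        then obtain i where "i < N" "f i #> g = f i" "X = f i" by auto
        then show "X \<in> {X \<in> rcosets K. X #> g = X}" using fR by auto
      next
        fix X assume X: "X \<in> {X \<in> rcosets K. X #> g = X}"
        then obtain j where "j < N" "f j = X" using fsurj by blast
        then show "X \<in> f ` {i \<in> {..<N}. f i #> g = f i}" using X by auto
      qed
      show ?thesis using card_image[OF inj] img by simp
    qed
    finally show ?thesis unfolding fixX_def by simp
  qed
  show ?thesis using rep tr by blast
qed

lemma stab_sum:
  assumes K: "subgroup K G" and X: "X \<in> rcosets K"
    and cls: "\<And>x g. x \<in> carrier G \<Longrightarrow> g \<in> carrier G \<Longrightarrow> F (x \<otimes> g \<otimes> inv x) = F g"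
  shows "(\<Sum>g\<in>{g\<in>carrier G. X #> g = X}. F g) = (\<Sum>k\<in>K. F k)"
proof -
  have Ksub: "K \<subseteq> carrier G" using subgroup.subset[OF K] .
  obtain a where a: "a \<in> carrier G" "X = K #> a" using X unfolding RCOSETS_def by auto
  define \<phi> where "\<phi> k = inv a \<otimes> k \<otimes> a" for k
  have alg: "inv a \<otimes> (a \<otimes> g \<otimes> inv a) \<otimes> a = g" if "g \<in> carrier G" for g
  proof -
    have ia: "inv a \<in> carrier G" using a by simp
    have "inv a \<otimes> (a \<otimes> g \<otimes> inv a) \<otimes> a = inv a \<otimes> ((a \<otimes> g \<otimes> inv a) \<otimes> a)"
      using a that ia by (intro m_assoc) auto
    also have "(a \<otimes> g \<otimes> inv a) \<otimes> a = (a \<otimes> g) \<otimes> (inv a \<otimes> a)"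
      using a that ia by (intro m_assoc) auto
    also have "\<dots> = a \<otimes> g" using a that by simp
    also have "inv a \<otimes> (a \<otimes> g) = (inv a \<otimes> a) \<otimes> g" using a that ia by (intro m_assoc[symmetric]) auto
    also have "\<dots> = g" using a that by simp
    finally show ?thesis .
  qed
  have alg2: "a \<otimes> (inv a \<otimes> k \<otimes> a) = k \<otimes> a" if "k \<in> carrier G" for k
  proof -
    have ia: "inv a \<in> carrier G" using a by simp
    have "a \<otimes> (inv a \<otimes> k \<otimes> a) = a \<otimes> (inv a \<otimes> k) \<otimes> a"
      using a that ia by (intro m_assoc[symmetric]) auto
    also have "a \<otimes> (inv a \<otimes> k) = (a \<otimes> inv a) \<otimes> k" using a that ia by (intro m_assoc[symmetric]) auto
    also have "\<dots> = k" using a that by simp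
    finally show ?thesis .
  qed
  have stab: "{g\<in>carrier G. X #> g = X} = \<phi> ` K"
  proof (intro equalityI subsetI)
    fix g assume "g \<in> {g\<in>carrier G. X #> g = X}"
    hence g: "g \<in> carrier G" "K #> a #> g = K #> a" using a by auto
    have ag: "a \<otimes> g \<in> carrier G" using a g by simp
    have "K #> (a \<otimes> g) = K #> a" using g coset_mult_assoc[OF Ksub a(1) g(1)] by simp
    hence "a \<otimes> g \<in> K #> a" using repr_independenceD[OF K ag] by simp
    hence k: "a \<otimes> g \<otimes> inv a \<in> K" using subgroup.rcos_module_imp[OF K is_group a(1)] by simp
    have "g = \<phi> (a \<otimes> g \<otimes> inv a)" unfolding \<phi>_def using alg[OF g(1)] by simp
    then show "g \<in> \<phi> ` K" using k by blast
  next
    fix g assume "g \<in> \<phi> ` K"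
    then obtain k where k: "k \<in> K" "g = \<phi> k" by blast
    have kc: "k \<in> carrier G" using k Ksub by auto
    have gc: "g \<in> carrier G" using k kc a unfolding \<phi>_def by simp
    have "a \<otimes> g = k \<otimes> a" using alg2[OF kc] k unfolding \<phi>_def by simp
    hence "a \<otimes> g \<in> K #> a" using rcosI[OF k(1) Ksub a(1)] by simp
    hence "K #> a = K #> (a \<otimes> g)" using repr_independence[OF _ a(1) K] by simp
    hence "X #> g = X" using a coset_mult_assoc[OF Ksub a(1) gc] by simp
    then show "g \<in> {g\<in>carrier G. X #> g = X}" using gc by simp
  qed
  have inj: "inj_on \<phi> K"
  proof
    fix k1 k2 assume "k1 \<in> K" "k2 \<in> K" "\<phi> k1 = \<phi> k2"
    hence c: "k1 \<in> carrier G" "k2 \<in> carrier G" "inv a \<otimes> k1 \<otimes> a = inv a \<otimes> k2 \<otimes> a"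
      using Ksub unfolding \<phi>_def by auto
    then show "k1 = k2" using a by simp
  qed
  have "(\<Sum>g\<in>{g\<in>carrier G. X #> g = X}. F g) = (\<Sum>k\<in>K. F (\<phi> k))"
    unfolding stab using sum.reindex[OF inj] by simp
  also have "\<dots> = (\<Sum>k\<in>K. F k)"
  proof (rule sum.cong[OF refl])
    fix k assume "k \<in> K"
    hence kc: "k \<in> carrier G" using Ksub by auto
    have "F (\<phi> k) = F (inv a \<otimes> k \<otimes> inv (inv a))" unfolding \<phi>_def using a by simp
    also have "\<dots> = F k" using cls[OF inv_closed[OF a(1)] kc] .
    finally show "F (\<phi> k) = F k" .
  qed
  finally show ?thesis .
qed

lemma frob_count:
  fixes F :: "'a \<Rightarrow> complex"
  assumes fin: "finite (carrier G)" and K: "subgroup K G"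
    and cls: "\<And>x g. x \<in> carrier G \<Longrightarrow> g \<in> carrier G \<Longrightarrow> F (x \<otimes> g \<otimes> inv x) = F g"
  shows "(\<Sum>g\<in>carrier G. of_nat (fixX G K g) * F g) = of_nat (card (rcosets K)) * (\<Sum>k\<in>K. F k)"
proof -
  have finR: "finite (rcosets K)" using finite_rcosets[OF fin K] .
  have "(\<Sum>g\<in>carrier G. of_nat (fixX G K g) * F g) =
        (\<Sum>g\<in>carrier G. \<Sum>X\<in>rcosets K. if X #> g = X then F g else 0)"
    unfolding fixX_def by (intro sum.cong refl card_filter_sum[OF finR])
  also have "\<dots> = (\<Sum>X\<in>rcosets K. \<Sum>g\<in>carrier G. if X #> g = X then F g else 0)"
    by (rule sum.swap)
  also have "\<dots> = (\<Sum>X\<in>rcosets K. \<Sum>g\<in>{g\<in>carrier G. X #> g = X}. F g)"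
    by (rule sum.cong[OF refl], rule sum.inter_filter[OF fin, symmetric])
  also have "\<dots> = (\<Sum>X\<in>rcosets K. \<Sum>k\<in>K. F k)"
    by (intro sum.cong refl stab_sum[OF K _ cls]) auto
  also have "\<dots> = of_nat (card (rcosets K)) * (\<Sum>k\<in>K. F k)" by simp
  finally show ?thesis .
qed

end


context group
begin

lemma coset_inv_fix:
  assumes H: "subgroup H G" and X: "X \<in> rcosets H" and h: "h \<in> carrier G"
  shows "(X #> inv h = X) = (X #> h = X)"
proof -
  have Xc: "X \<subseteq> carrier G" using subgroup.rcosets_carrier[OF H is_group X] .
  have ih: "inv h \<in> carrier G" using h by simp
  show ?thesis
  proof
    assume a: "X #> inv h = X"
    have "X #> h = (X #> inv h) #> h" using a by simp
    also have "\<dots> = X" using coset_mult_assoc[OF Xc ih h] h Xc by simp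
    finally show "X #> h = X" .
  next
    assume a: "X #> h = X"
    have "X #> inv h = (X #> h) #> inv h" using a by simp
    also have "\<dots> = X" using coset_mult_assoc[OF Xc h ih] h Xc by simp
    finally show "X #> inv h = X" .
  qed
qed

lemma rX_burnside:
  assumes fin: "finite (carrier G)" and H: "subgroup H G"
  shows "rX G H * card H = (\<Sum>h\<in>H. fixX G H h)"
proof -
  define G' where "G' = G\<lparr>carrier := H\<rparr>"
  define E where "E = rcosets H"
  define \<phi> where "\<phi> h = (\<lambda>X\<in>E. X #> inv h)" for h
  have Hc: "H \<subseteq> carrier G" using subgroup.subset[OF H] .
  have G'g: "group G'" unfolding G'_def using subgroup.subgroup_is_group[OF H is_group] .
  have Xc: "X \<subseteq> carrier G" if "X \<in> E" for X using subgroup.rcosets_carrier[OF H is_group] that E_def by auto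
  have finE: "finite E" unfolding E_def using finite_rcosets[OF fin H] .
  have phiBij: "\<phi> h \<in> Bij E" if h: "h \<in> H" for h
  proof -
    have hc: "h \<in> carrier G" and ih: "inv h \<in> carrier G" using h Hc by auto
    have "bij_betw (\<lambda>X. X #> inv h) E E"
    proof (rule bij_betwI[where g = "\<lambda>X. X #> h"])
      show "(\<lambda>X. X #> inv h) \<in> E \<rightarrow> E" using rcosets_mult_closed[OF H _ ih] E_def by auto
      show "(\<lambda>X. X #> h) \<in> E \<rightarrow> E" using rcosets_mult_closed[OF H _ hc] E_def by auto
      fix X assume X: "X \<in> E"
      show "X #> inv h #> h = X" using coset_mult_assoc[OF Xc[OF X] ih hc] Xc[OF X] hc by simp
      show "X #> h #> inv h = X" using coset_mult_assoc[OF Xc[OF X] hc ih] Xc[OF X] hc by simp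
    qed
    then have "bij_betw (\<phi> h) E E"
      using bij_betw_cong[of E "\<phi> h" "\<lambda>X. X #> inv h" E] unfolding \<phi>_def by simp
    moreover have "\<phi> h \<in> extensional E" unfolding \<phi>_def by simp
    ultimately show ?thesis unfolding Bij_def by simp
  qed
  have act: "group_action G' E \<phi>"
    unfolding group_action_def group_hom_def group_hom_axioms_def
  proof (intro conjI)
    show "group G'" by (rule G'g)
    show "group (BijGroup E)" by (rule group_BijGroup)
    show "\<phi> \<in> hom G' (BijGroup E)" unfolding hom_def
    proof (intro CollectI conjI ballI)
      show "\<phi> \<in> carrier G' \<rightarrow> carrier (BijGroup E)" using phiBij unfolding G'_def BijGroup_def by auto
      fix x y assume "x \<in> carrier G'" "y \<in> carrier G'"
      hence x: "x \<in> H" and y: "y \<in> H" unfolding G'_def by auto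
      have xc: "x \<in> carrier G" "inv x \<in> carrier G" and yc: "y \<in> carrier G" "inv y \<in> carrier G"
        using x y Hc by auto
      have "\<phi> (x \<otimes> y) = compose E (\<phi> x) (\<phi> y)"
      proof (rule ext)
        fix X show "\<phi> (x \<otimes> y) X = compose E (\<phi> x) (\<phi> y) X"
        proof (cases "X \<in> E")
          case True
          have "X #> inv (x \<otimes> y) = X #> inv y #> inv x"
            using coset_mult_assoc[OF Xc[OF True] yc(2) xc(2)] xc yc by (simp add: inv_mult_group)
          moreover have "X #> inv y \<in> E" using rcosets_mult_closed[OF H _ yc(2)] True E_def by auto
          ultimately show ?thesis using True unfolding \<phi>_def compose_def by simp
        next
          case False then show ?thesis unfolding \<phi>_def compose_def by simp
        qed
      qed
      then show "\<phi> (x \<otimes>\<^bsub>G'\<^esub> y) = \<phi> x \<otimes>\<^bsub>BijGroup E\<^esub> \<phi> y"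
        using phiBij[OF x] phiBij[OF y] unfolding G'_def BijGroup_def by simp
    qed
  qed
  have bs: "card (orbits G' E \<phi>) * Coset.order G' = (\<Sum>h\<in>carrier G'. card (invariants E \<phi> h))"
  proof -
    have "finite (carrier G')" unfolding G'_def using finite_subset[OF Hc fin] by simp
    then show ?thesis using group_action.burnside[OF act _ finE] by blast
  qed
  have orb: "orbits G' E \<phi> = (\<lambda>X. {X #> h | h. h \<in> H}) ` E"
  proof -
    have "orbit G' \<phi> X = {X #> h | h. h \<in> H}" if X: "X \<in> E" for X
    proof -
      have "orbit G' \<phi> X = {X #> inv h | h. h \<in> H}" unfolding orbit_def G'_def \<phi>_def using X by auto
      also have "\<dots> = {X #> h | h. h \<in> H}"
      proof (intro equalityI subsetI)
        fix Y assume "Y \<in> {X #> inv h | h. h \<in> H}"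
        then obtain h where "h \<in> H" "Y = X #> inv h" by auto
        moreover have "inv h \<in> H" using \<open>h \<in> H\<close> subgroup.m_inv_closed[OF H] by simp
        ultimately show "Y \<in> {X #> h | h. h \<in> H}" by blast
      next
        fix Y assume "Y \<in> {X #> h | h. h \<in> H}"
        then obtain h where h: "h \<in> H" "Y = X #> h" by auto
        have "inv h \<in> H" using h subgroup.m_inv_closed[OF H] by simp
        moreover have "inv (inv h) = h" using h Hc by auto
        ultimately show "Y \<in> {X #> inv h | h. h \<in> H}" using h
          by (intro CollectI exI[of _ "inv h"]) simp
      qed
      finally show ?thesis .
    qed
    then show ?thesis unfolding orbits_def by auto
  qed
  have inv: "card (invariants E \<phi> h) = fixX G H h" if h: "h \<in> H" for h
  proof -
    have "invariants E \<phi> h = {X \<in> rcosets H. X #> h = X}"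
    proof (intro equalityI subsetI)
      fix X assume "X \<in> invariants E \<phi> h"
      hence X: "X \<in> rcosets H" "X #> inv h = X" unfolding invariants_def \<phi>_def E_def by auto
      then show "X \<in> {X \<in> rcosets H. X #> h = X}" using coset_inv_fix[OF H X(1)] h Hc by auto
    next
      fix X assume "X \<in> {X \<in> rcosets H. X #> h = X}"
      hence X: "X \<in> rcosets H" "X #> h = X" by auto
      hence "X #> inv h = X" using coset_inv_fix[OF H X(1)] h Hc by auto
      then show "X \<in> invariants E \<phi> h" using X unfolding invariants_def \<phi>_def E_def by auto
    qed
    then show ?thesis unfolding fixX_def by simp
  qed
  have r: "rX G H = card (orbits G' E \<phi>)" using orb unfolding rX_def E_def by simp
  have o: "Coset.order G' = card H" unfolding Coset.order_def G'_def by simp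
  have "rX G H * card H = card (orbits G' E \<phi>) * Coset.order G'" using r o by simp
  also have "\<dots> = (\<Sum>h\<in>H. fixX G H h)" unfolding bs using inv unfolding G'_def by simp
  finally show ?thesis .
qed

end


context group
begin

lemma fixX_triv:
  assumes h: "h \<in> carrier G" "h \<noteq> \<one>"
  shows "fixX G {\<one>} h = 0"
proof -
  have e: "{X \<in> rcosets {\<one>}. X #> h = X} = {}"
  proof (intro equalityI subsetI)
    fix X assume "X \<in> {X \<in> rcosets {\<one>}. X #> h = X}"
    hence X: "X \<in> rcosets {\<one>}" "X #> h = X" by auto
    obtain a where a: "a \<in> carrier G" "X = {\<one>} #> a" using X unfolding RCOSETS_def by auto
    have Xa: "X = {a}" using a unfolding r_coset_def by auto
    have "{a} #> h = {a \<otimes> h}" unfolding r_coset_def by auto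
    hence "a \<otimes> h = a" using X(2) Xa by simp
    hence "h = \<one>" using a h by simp
    with h show "X \<in> {}" by simp
  qed simp
  show ?thesis unfolding fixX_def e by simp
qed

lemma fixX_one:
  assumes H: "subgroup H G"
  shows "fixX G H \<one> = card (rcosets H)"
proof -
  have "{X \<in> rcosets H. X #> \<one> = X} = rcosets H"
    using subgroup.rcosets_carrier[OF H is_group] by auto
  then show ?thesis unfolding fixX_def by simp
qed

lemma Irr_class:
  assumes chi: "\<chi> \<in> Irr G"
  shows "\<And>x g. x \<in> carrier G \<Longrightarrow> g \<in> carrier G \<Longrightarrow> \<chi> (x \<otimes> g \<otimes> inv x) = \<chi> g"
proof -
  obtain n \<rho> where r: "is_rep G n \<rho>" "\<chi> = character G \<rho>" using chi by (elim Irr_rep)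
  fix x g assume "x \<in> carrier G" "g \<in> carrier G"
  then show "\<chi> (x \<otimes> g \<otimes> inv x) = \<chi> g" using character_conj[OF is_group r(1)] r(2) by simp
qed

lemma perm_decomp:
  assumes fin: "finite (carrier G)" and K: "subgroup K G"
    and mK: "\<And>\<chi>. \<chi> \<in> Irr G \<Longrightarrow> (\<Sum>k\<in>K. \<chi> k) = of_nat (card K * mf \<chi>)"
  shows "\<forall>g\<in>carrier G. of_nat (fixX G K g) = (\<Sum>\<chi>\<in>Irr G. of_nat (mf \<chi>) * \<chi> g)"
proof -
  obtain N \<pi> where \<pi>: "is_rep G N \<pi>" "\<forall>g\<in>carrier G. mat_trace (\<pi> g) = of_nat (fixX G K g)"
    using perm_rep[OF fin K] by blast
  obtain c where c: "\<forall>g. character G \<pi> g = (\<Sum>\<chi>\<in>Irr G. of_nat (c \<chi>) * \<chi> g)"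
    using decomp[OF fin \<pi>(1)] by blast
  have lag: "card (rcosets K) * card K = card (carrier G)"
    using lagrange[OF K] unfolding Coset.order_def .
  have Gpos: "card (carrier G) > 0" using fin by (auto simp: card_gt_0_iff)
  have cm: "c \<chi> = mf \<chi>" if chi: "\<chi> \<in> Irr G" for \<chi>
  proof -
    have "(\<Sum>g\<in>carrier G. character G \<pi> g * cnj (\<chi> g)) = (\<Sum>g\<in>carrier G. of_nat (fixX G K g) * cnj (\<chi> g))"
      using \<pi>(2) unfolding character_def by (intro sum.cong refl) simp
    also have "\<dots> = of_nat (card (rcosets K)) * (\<Sum>k\<in>K. cnj (\<chi> k))"
      by (rule frob_count[OF fin K]) (simp add: Irr_class[OF chi])
    also have "(\<Sum>k\<in>K. cnj (\<chi> k)) = cnj (\<Sum>k\<in>K. \<chi> k)" by simp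
    also have "\<dots> = of_nat (card K * mf \<chi>)" using mK[OF chi] by simp
    finally have "(\<Sum>g\<in>carrier G. character G \<pi> g * cnj (\<chi> g)) = of_nat (card (carrier G) * mf \<chi>)"
      using lag by (metis mult.assoc of_nat_mult)
    moreover have "(\<Sum>g\<in>carrier G. character G \<pi> g * cnj (\<chi> g)) = of_nat (c \<chi>) * of_nat (card (carrier G))"
      using decomp_coeff[OF fin c chi] .
    ultimately have "of_nat (c \<chi> * card (carrier G)) = (of_nat (card (carrier G) * mf \<chi>) :: complex)" by simp
    hence "c \<chi> * card (carrier G) = card (carrier G) * mf \<chi>" using of_nat_eq_iff by blast
    then show ?thesis using Gpos by simp
  qed
  show ?thesis
  proof
    fix g assume g: "g \<in> carrier G"
    have "of_nat (fixX G K g) = character G \<pi> g" using \<pi>(2) g unfolding character_def by simp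
    also have "\<dots> = (\<Sum>\<chi>\<in>Irr G. of_nat (mf \<chi>) * \<chi> g)" using c cm by simp
    finally show "of_nat (fixX G K g) = (\<Sum>\<chi>\<in>Irr G. of_nat (mf \<chi>) * \<chi> g)" .
  qed
qed

end


context group
begin

lemma main:
  assumes fin: "finite (carrier G)" and H: "subgroup H G" and Hne: "H \<noteq> {\<one>}"
  shows "D G H > (1 / real (card (carrier G))) * (\<Sum>h \<in> H - {\<one>}. real (fixX G H h))
       \<and> D G H > real (rX G H) / real (card (rcosets H)) - 1 / real (card H)"
proof -
  have Hc: "H \<subseteq> carrier G" using subgroup.subset[OF H] .
  have finH: "finite H" using finite_subset[OF Hc fin] .
  have oneH: "\<one> \<in> H" using subgroup.one_closed[OF H] .
  obtain h0 where h0: "h0 \<in> H" "h0 \<noteq> \<one>" using Hne oneH by blast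
  have cardH: "card H \<ge> 2"
  proof -
    have "{\<one>, h0} \<subseteq> H" using h0 oneH by auto
    then have "card {\<one>, h0} \<le> card H" using card_mono[OF finH] by blast
    then show ?thesis using h0 by simp
  qed
  have finI: "finite (Irr G)" using finite_Irr[OF fin] .
  define NG where "NG = card (carrier G)"
  have NGpos: "NG > 0" using fin unfolding NG_def by (auto simp: card_gt_0_iff)
  define R where "R = card (rcosets H)"
  have lag: "R * card H = NG" using lagrange[OF H] unfolding R_def NG_def Coset.order_def .
  have "\<forall>\<chi>\<in>Irr G. \<exists>p. \<chi> \<one> = of_nat (snd p) \<and> fst p \<le> snd p \<and> (\<Sum>h\<in>H. \<chi> h) = of_nat (card H * fst p)"
  proof
    fix \<chi> assume "\<chi> \<in> Irr G"
    then obtain a b where "\<chi> \<one> = of_nat b" "a \<le> b" "(\<Sum>h\<in>H. \<chi> h) = of_nat (card H * a)"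
      using Irr_restrict_mult[OF fin H] by blast
    then show "\<exists>p. \<chi> \<one> = of_nat (snd p) \<and> fst p \<le> snd p \<and> (\<Sum>h\<in>H. \<chi> h) = of_nat (card H * fst p)"
      by (intro exI[of _ "(a, b)"]) simp
  qed
  then obtain p where p: "\<forall>\<chi>\<in>Irr G. \<chi> \<one> = of_nat (snd (p \<chi>)) \<and> fst (p \<chi>) \<le> snd (p \<chi>) \<and>
      (\<Sum>h\<in>H. \<chi> h) = of_nat (card H * fst (p \<chi>))"
    by (rule bchoice[elim_format]) blast
  define m where "m \<chi> = fst (p \<chi>)" for \<chi>
  define n where "n \<chi> = snd (p \<chi>)" for \<chi>
  have n1: "\<chi> \<one> = of_nat (n \<chi>)" if "\<chi> \<in> Irr G" for \<chi> using p that unfolding n_def by auto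
  have mn: "m \<chi> \<le> n \<chi>" if "\<chi> \<in> Irr G" for \<chi> using p that unfolding m_def n_def by auto
  have mH: "(\<Sum>h\<in>H. \<chi> h) = of_nat (card H * m \<chi>)" if "\<chi> \<in> Irr G" for \<chi>
    using p that unfolding m_def by auto
  have npos: "n \<chi> \<ge> 1" if chi: "\<chi> \<in> Irr G" for \<chi>
  proof -
    have "Re (\<chi> \<one>) \<ge> 1" using Irr_deg[OF chi] by simp
    then show ?thesis using n1[OF chi] by simp
  qed
  have fixdec: "\<forall>g\<in>carrier G. of_nat (fixX G H g) = (\<Sum>\<chi>\<in>Irr G. of_nat (m \<chi>) * \<chi> g)"
    using perm_decomp[OF fin H mH] .
  have m1: "(\<Sum>k\<in>{\<one>}. \<chi> k) = of_nat (card {\<one>} * n \<chi>)" if "\<chi> \<in> Irr G" for \<chi>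
    using n1[OF that] by simp
  have regdec: "\<forall>g\<in>carrier G. of_nat (fixX G {\<one>} g) = (\<Sum>\<chi>\<in>Irr G. of_nat (n \<chi>) * \<chi> g)"
    using perm_decomp[OF fin triv_subgroup m1] .
  have colorth: "(\<Sum>\<chi>\<in>Irr G. of_nat (n \<chi>) * \<chi> h) = 0" if "h \<in> carrier G" "h \<noteq> \<one>" for h
    using regdec that fixX_triv[OF that] by force
  define s where "s \<chi> = real (card H * m \<chi>) - real (n \<chi>)" for \<chi>
  have S: "(\<Sum>h\<in>H-{\<one>}. \<chi> h) = of_real (s \<chi>)" if chi: "\<chi> \<in> Irr G" for \<chi>
  proof -
    have "(\<Sum>h\<in>H. \<chi> h) = \<chi> \<one> + (\<Sum>h\<in>H-{\<one>}. \<chi> h)" using sum.remove[OF finH oneH] .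
    then have "(\<Sum>h\<in>H-{\<one>}. \<chi> h) = (\<Sum>h\<in>H. \<chi> h) - \<chi> \<one>" by simp
    also have "\<dots> = of_nat (card H * m \<chi>) - of_nat (n \<chi>)" using mH[OF chi] n1[OF chi] by simp
    finally show ?thesis unfolding s_def by simp
  qed
  have Dform: "D G H = (1 / real NG) * (\<Sum>\<chi>\<in>Irr G. real (n \<chi>) * \<bar>s \<chi>\<bar>)"
    unfolding D_def NG_def
    by (intro arg_cong2[where f="(*)"] refl sum.cong) (simp_all add: S n1)
  have fixsum: "(\<Sum>h\<in>H-{\<one>}. real (fixX G H h)) = (\<Sum>\<chi>\<in>Irr G. real (m \<chi>) * s \<chi>)"
  proof -
    have "complex_of_real (\<Sum>h\<in>H-{\<one>}. real (fixX G H h)) = (\<Sum>h\<in>H-{\<one>}. of_nat (fixX G H h))" by simp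
    also have "\<dots> = (\<Sum>h\<in>H-{\<one>}. \<Sum>\<chi>\<in>Irr G. of_nat (m \<chi>) * \<chi> h)"
      using fixdec Hc by (intro sum.cong refl) auto
    also have "\<dots> = (\<Sum>\<chi>\<in>Irr G. \<Sum>h\<in>H-{\<one>}. of_nat (m \<chi>) * \<chi> h)" by (rule sum.swap)
    also have "\<dots> = (\<Sum>\<chi>\<in>Irr G. of_nat (m \<chi>) * (\<Sum>h\<in>H-{\<one>}. \<chi> h))" by (simp only: sum_distrib_left)
    also have "\<dots> = (\<Sum>\<chi>\<in>Irr G. of_nat (m \<chi>) * of_real (s \<chi>))" by (intro sum.cong refl) (simp add: S)
    also have "\<dots> = complex_of_real (\<Sum>\<chi>\<in>Irr G. real (m \<chi>) * s \<chi>)" by simp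
    finally show ?thesis using of_real_eq_iff by blast
  qed
  have zero: "(\<Sum>\<chi>\<in>Irr G. real (n \<chi>) * s \<chi>) = 0"
  proof -
    have "complex_of_real (\<Sum>\<chi>\<in>Irr G. real (n \<chi>) * s \<chi>) = (\<Sum>\<chi>\<in>Irr G. of_nat (n \<chi>) * of_real (s \<chi>))" by simp
    also have "\<dots> = (\<Sum>\<chi>\<in>Irr G. of_nat (n \<chi>) * (\<Sum>h\<in>H-{\<one>}. \<chi> h))" by (intro sum.cong refl) (simp add: S)
    also have "\<dots> = (\<Sum>\<chi>\<in>Irr G. \<Sum>h\<in>H-{\<one>}. of_nat (n \<chi>) * \<chi> h)" by (simp only: sum_distrib_left)
    also have "\<dots> = (\<Sum>h\<in>H-{\<one>}. \<Sum>\<chi>\<in>Irr G. of_nat (n \<chi>) * \<chi> h)" by (rule sum.swap)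
    also have "\<dots> = (\<Sum>h\<in>H-{\<one>}. 0)" using colorth Hc by (intro sum.cong refl) auto
    finally have z: "complex_of_real (\<Sum>\<chi>\<in>Irr G. real (n \<chi>) * s \<chi>) = (\<Sum>h\<in>H-{\<one>}. 0)" .
    show ?thesis using z by (simp only: sum.neutral_const of_real_eq_0_iff)
  qed
  define \<tau> where "\<tau> = character G (\<lambda>g. 1\<^sub>m 1)"
  have \<tau>I: "\<tau> \<in> Irr G" unfolding \<tau>_def by (rule triv_Irr)
  have \<tau>v: "\<tau> g = 1" if "g \<in> carrier G" for g unfolding \<tau>_def using triv_char that by simp
  have n\<tau>: "n \<tau> = 1" using n1[OF \<tau>I] \<tau>v[OF one_closed] by simp
  have m\<tau>: "m \<tau> = 1"
  proof -
    have "(\<Sum>h\<in>H. \<tau> h) = (\<Sum>h\<in>H. 1)" using \<tau>v Hc by (intro sum.cong refl) auto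
    then have "(\<Sum>h\<in>H. \<tau> h) = of_nat (card H)" by simp
    then have "of_nat (card H * m \<tau>) = (of_nat (card H) :: complex)" using mH[OF \<tau>I] by simp
    then have "card H * m \<tau> = card H" using of_nat_eq_iff by blast
    then show ?thesis using cardH by simp
  qed
  have s\<tau>: "s \<tau> > 0" unfolding s_def using n\<tau> m\<tau> cardH by simp
  have "\<exists>\<chi>0\<in>Irr G. s \<chi>0 < 0"
  proof (rule ccontr)
    assume "\<not> ?thesis"
    hence nonneg: "\<forall>\<chi>\<in>Irr G. s \<chi> \<ge> 0" by auto
    have "real (n \<tau>) * s \<tau> \<le> (\<Sum>\<chi>\<in>Irr G. real (n \<chi>) * s \<chi>)"
      by (rule member_le_sum) (use \<tau>I finI nonneg in auto)
    then show False using zero n\<tau> s\<tau> by simp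
  qed
  then obtain \<chi>0 where \<chi>0: "\<chi>0 \<in> Irr G" "s \<chi>0 < 0" by blast
  have ineq: "(\<Sum>\<chi>\<in>Irr G. real (m \<chi>) * s \<chi>) < (\<Sum>\<chi>\<in>Irr G. real (n \<chi>) * \<bar>s \<chi>\<bar>)"
  proof (rule sum_strict_mono_ex1[OF finI])
    show "\<forall>\<chi>\<in>Irr G. real (m \<chi>) * s \<chi> \<le> real (n \<chi>) * \<bar>s \<chi>\<bar>"
    proof
      fix \<chi> assume chi: "\<chi> \<in> Irr G"
      show "real (m \<chi>) * s \<chi> \<le> real (n \<chi>) * \<bar>s \<chi>\<bar>"
      proof (cases "s \<chi> \<ge> 0")
        case True
        then show ?thesis using mn[OF chi] by (simp add: mult_right_mono)
      next
        case False
        then have "real (m \<chi>) * s \<chi> \<le> 0" by (simp add: mult_nonneg_nonpos)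
        moreover have "0 \<le> real (n \<chi>) * \<bar>s \<chi>\<bar>" by simp
        ultimately show ?thesis by linarith
      qed
    qed
    have "real (m \<chi>0) * s \<chi>0 \<le> 0" using \<chi>0 by (simp add: mult_nonneg_nonpos)
    moreover have "0 < real (n \<chi>0) * \<bar>s \<chi>0\<bar>"
    proof (rule mult_pos_pos)
      show "0 < real (n \<chi>0)" using npos[OF \<chi>0(1)] by simp
      show "0 < \<bar>s \<chi>0\<bar>" using \<chi>0(2) by simp
    qed
    ultimately show "\<exists>\<chi>\<in>Irr G. real (m \<chi>) * s \<chi> < real (n \<chi>) * \<bar>s \<chi>\<bar>" using \<chi>0(1) by force
  qed
  have part1: "D G H > (1 / real NG) * (\<Sum>h\<in>H-{\<one>}. real (fixX G H h))"
    unfolding Dform fixsum using ineq NGpos by (simp add: divide_strict_right_mono)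
  have rxb: "real (rX G H) * real (card H) = (\<Sum>h\<in>H-{\<one>}. real (fixX G H h)) + real R"
  proof -
    have "rX G H * card H = (\<Sum>h\<in>H. fixX G H h)" using rX_burnside[OF fin H] .
    also have "\<dots> = fixX G H \<one> + (\<Sum>h\<in>H-{\<one>}. fixX G H h)" using sum.remove[OF finH oneH] .
    also have "fixX G H \<one> = R" unfolding R_def using fixX_one[OF H] .
    finally have "rX G H * card H = R + (\<Sum>h\<in>H-{\<one>}. fixX G H h)" .
    then have "real (rX G H * card H) = real (R + (\<Sum>h\<in>H-{\<one>}. fixX G H h))" by simp
    then show ?thesis by simp
  qed
  have Rpos: "R > 0" using lag NGpos by (cases R) auto
  have part2eq: "real (rX G H) / real R - 1 / real (card H) = (1 / real NG) * (\<Sum>h\<in>H-{\<one>}. real (fixX G H h))"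
  proof -
    have NGr: "real NG = real R * real (card H)" using lag by (metis of_nat_mult)
    have cH: "real (card H) > 0" using cardH by simp
    have "real (rX G H) / real R - 1 / real (card H) = (real (rX G H) * real (card H) - real R) / (real R * real (card H))"
      using Rpos cH by (simp add: field_simps)
    also have "\<dots> = (\<Sum>h\<in>H-{\<one>}. real (fixX G H h)) / real NG" using rxb NGr by simp
    finally show ?thesis by simp
  qed
  show ?thesis using part1 part2eq unfolding NG_def R_def by simp
qed

end


theorem corollary2:
  fixes G :: "('a, 'b) monoid_scheme" and H :: "'a set"
  assumes "group G" and "finite (carrier G)" and "subgroup H G"
    and "H \<noteq> {\<one>\<^bsub>G\<^esub>}"
  shows "D G H > (1 / real (card (carrier G))) * (\<Sum>h \<in> H - {\<one>\<^bsub>G\<^esub>}. real (fixX G H h))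
       \<and> D G H > real (rX G H) / real (card (rcosets\<^bsub>G\<^esub> H)) - 1 / real (card H)"
  using group.main[OF assms(1) assms(2) assms(3) assms(4)] .

end
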